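(* Let $p$ be a prime and let $\lambda,\mu$ be probability measures on $\mathbb F_p$. Then $$\sum_{b\in\mathbb F_p^*}\lambda(b)\,\|\mu*\rho_b[\mu]\|_2\ll\left(\|\lambda\|_2+\|\mu\|_2+\|\mu\|_2^{-1}p^{-1/2}\right)^{c_0/7}\|\mu\|_2,$$ where the implied constant is absolute.
   Context: $\mathbb F_p^*=\mathbb F_p\setminus\{0\}$. A probability measure on $\mathbb F_p$ is a function $f:\mathbb F_p\to\mathbb R_{\ge0}$ with $\sum_x f(x)=1$. For $f:\mathbb F_p\to\mathbb C$, $\|f\|_r=(\sum_{x\in\mathbb F_p}|f(x)|^r)^{1/r}$; $f*g(x)=\sum_{y\in\mathbb F_p}f(y)g(x-y)$; for $z\in\mathbb F_p^*$, $\rho_z[f](x)=f(x/z)$. For $A,B\subset\mathbb F_p$, $E(A,B)$ is the number of solutions of $a_1+b_1=a_2+b_2$ with $a_i\in A$, $b_i\in B$, and $bA=\{ba:a\in A\}$. Here $c_0>0$ is a fixed absolute constant (whose existence is a theorem of Bourgain) such that for every prime $p$ and all $A\subset\mathbb F_p$, $B\subset\mathbb F_p^*$ with $|A|\ge|B|$ one has $\sum_{b\in B}E(A,bA)\ll\min(p/|A|,|B|)^{-c_0}|A|^3|B|$. *)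

theory Defs
  imports Complex_Main "HOL-Computational_Algebra.Primes"
begin

text \<open>The field F_p is represented by the residues {0..<p} of the integers,
  with arithmetic taken mod p. Functions on F_p are functions int => real,
  of which only the values on {0..<p} matter.\<close>

definition Fp :: "int \<Rightarrow> int set" where
  "Fp p = {0..<p}"

definition Fp_star :: "int \<Rightarrow> int set" where
  "Fp_star p = Fp p - {0}"

definition prob_measure :: "int \<Rightarrow> (int \<Rightarrow> real) \<Rightarrow> bool" where
  "prob_measure p f \<longleftrightarrow> (\<forall>x\<in>Fp p. 0 \<le> f x) \<and> (\<Sum>x\<in>Fp p. f x) = 1"

definition norm2 :: "int \<Rightarrow> (int \<Rightarrow> real) \<Rightarrow> real" where
  "norm2 p f = sqrt (\<Sum>x\<in>Fp p. \<bar>f x\<bar> ^ 2)"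

definition conv :: "int \<Rightarrow> (int \<Rightarrow> real) \<Rightarrow> (int \<Rightarrow> real) \<Rightarrow> int \<Rightarrow> real" where
  "conv p f g x = (\<Sum>y\<in>Fp p. f y * g ((x - y) mod p))"

definition fdiv :: "int \<Rightarrow> int \<Rightarrow> int \<Rightarrow> int" where
  "fdiv p x z = (THE y. y \<in> Fp p \<and> (y * z) mod p = x mod p)"

definition dil :: "int \<Rightarrow> int \<Rightarrow> (int \<Rightarrow> real) \<Rightarrow> int \<Rightarrow> real" where
  "dil p z f x = f (fdiv p x z)"

definition add_energy :: "int \<Rightarrow> int set \<Rightarrow> int set \<Rightarrow> nat" where
  "add_energy p A B = card {(a1, b1, a2, b2). a1 \<in> A \<and> b1 \<in> B \<and> a2 \<in> A \<and> b2 \<in> B \<and>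
      (a1 + b1) mod p = (a2 + b2) mod p}"

definition dilset :: "int \<Rightarrow> int \<Rightarrow> int set \<Rightarrow> int set" where
  "dilset p b A = (\<lambda>a. (b * a) mod p) ` A"

definition bourgain_energy :: "real \<Rightarrow> bool" where
  "bourgain_energy c0 \<longleftrightarrow> (\<exists>K. \<forall>p A B. prime p \<and> A \<subseteq> Fp p \<and> B \<subseteq> Fp_star p \<and>
      B \<noteq> {} \<and> card B \<le> card A \<longrightarrow>
      real (\<Sum>b\<in>B. add_energy p A (dilset p b A))
        \<le> K * (min (real_of_int p / real (card A)) (real (card B))) powr (- c0)
            * real (card A) ^ 3 * real (card B))"

end

theory Submission
  imports Defs "HOL-Analysis.Analysis"
begin


lemma Fp_finite[simp]: "finite (Fp p)" unfolding Fp_def by simp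
lemma Fp_star_finite[simp]: "finite (Fp_star p)" unfolding Fp_star_def by simp
lemma mod_in_Fp: "prime (p::int) \<Longrightarrow> x mod p \<in> Fp p"
  unfolding Fp_def using prime_gt_1_int[of p] by auto
lemma Fp_star_sub: "Fp_star p \<subseteq> Fp p" unfolding Fp_star_def by auto
lemma in_Fp_mod: "x \<in> Fp p \<Longrightarrow> x mod p = x" unfolding Fp_def by auto
lemma card_Fp: "card (Fp p) = nat p" unfolding Fp_def by simp

lemma inv_exists:
  assumes p: "prime (p::int)" and b: "b \<in> Fp_star p"
  shows "\<exists>b'. (b * b') mod p = 1"
proof -
  have b0: "0 < b" "b < p" using b unfolding Fp_star_def Fp_def by auto
  have "coprime b p"
    using prime_imp_coprime[OF p zdvd_not_zless[OF b0]] by (simp add: coprime_commute)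
  then have "gcd b p = 1" by simp
  then obtain u v where "u * b + v * p = 1" using bezout_int[of b p] by auto
  then have "b*u = 1 + (-v) * p" by (simp add: algebra_simps)
  then have "(b*u) mod p = 1 mod p" using mod_mult_self1[of 1 "-v" p] by presburger
  moreover have "1 mod p = 1" using prime_gt_1_int[OF p] by simp
  ultimately show ?thesis by auto
qed

lemma fdiv_char:
  assumes p: "prime (p::int)" and b: "b \<in> Fp_star p"
  shows "fdiv p x b \<in> Fp p \<and> (fdiv p x b * b) mod p = x mod p"
    and "y \<in> Fp p \<Longrightarrow> (y * b) mod p = x mod p \<Longrightarrow> y = fdiv p x b"
proof -
  obtain b' where b': "(b * b') mod p = 1" using inv_exists[OF p b] by blast
  have ex: "(x*b') mod p \<in> Fp p \<and> (((x*b') mod p) * b) mod p = x mod p"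
  proof
    show "(x*b') mod p \<in> Fp p" using mod_in_Fp[OF p] .
    have "(((x*b') mod p) * b) mod p = ((x*b') * b) mod p" by (rule mod_mult_left_eq)
    also have "\<dots> = (x * (b*b')) mod p" by (simp add: algebra_simps)
    also have "\<dots> = (x * ((b*b') mod p)) mod p" by (rule mod_mult_right_eq[symmetric])
    finally show "(((x*b') mod p) * b) mod p = x mod p" using b' by simp
  qed
  have uniq: "y1 = y2" if "y1 \<in> Fp p" "(y1 * b) mod p = x mod p"
      "y2 \<in> Fp p" "(y2 * b) mod p = x mod p" for y1 y2
  proof -
    have "(y1 * b * b') mod p = (((y1 * b) mod p) * b') mod p" by (rule mod_mult_left_eq[symmetric])
    also have "\<dots> = (((y2 * b) mod p) * b') mod p" using that by simp
    also have "\<dots> = (y2 * b * b') mod p" by (rule mod_mult_left_eq)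
    finally have e: "(y1 * b * b') mod p = (y2 * b * b') mod p" .
    have "y1 mod p = (y1 * ((b * b') mod p)) mod p" using b' by simp
    also have "\<dots> = (y1 * b * b') mod p" by (simp add: mod_mult_right_eq mult.assoc)
    also have "\<dots> = (y2 * b * b') mod p" by (rule e)
    also have "\<dots> = (y2 * ((b * b') mod p)) mod p" by (simp add: mod_mult_right_eq mult.assoc)
    also have "\<dots> = y2 mod p" using b' by simp
    finally show ?thesis using that by (simp add: in_Fp_mod)
  qed
  have th: "\<exists>!y. y \<in> Fp p \<and> (y * b) mod p = x mod p" using ex uniq by blast
  show "fdiv p x b \<in> Fp p \<and> (fdiv p x b * b) mod p = x mod p"
    unfolding fdiv_def by (rule theI'[OF th])
  show "y \<in> Fp p \<Longrightarrow> (y * b) mod p = x mod p \<Longrightarrow> y = fdiv p x b"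
  proof -
    assume "y \<in> Fp p" "(y * b) mod p = x mod p"
    then show "y = fdiv p x b" unfolding fdiv_def using th by (simp add: the1_equality)
  qed
qed

lemma fdiv_mul:
  assumes p: "prime (p::int)" and b: "b \<in> Fp_star p" and y: "y \<in> Fp p"
  shows "fdiv p ((b*y) mod p) b = y"
  using fdiv_char(2)[OF p b y] by (simp add: mult.commute)

lemma mul_fdiv:
  assumes p: "prime (p::int)" and b: "b \<in> Fp_star p" and z: "z \<in> Fp p"
  shows "(b * fdiv p z b) mod p = z"
  using fdiv_char(1)[OF p b, of z] z by (simp add: mult.commute in_Fp_mod)

lemma fdiv_bij:
  assumes p: "prime (p::int)" and b: "b \<in> Fp_star p"
  shows "bij_betw (\<lambda>x. fdiv p x b) (Fp p) (Fp p)"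
proof (rule bij_betw_byWitness[where f' = "\<lambda>y. (b*y) mod p"])
  show "\<forall>a\<in>Fp p. (b * fdiv p a b) mod p = a" using mul_fdiv[OF p b] by blast
  show "\<forall>a'\<in>Fp p. fdiv p ((b * a') mod p) b = a'" using fdiv_mul[OF p b] by blast
  show "(\<lambda>x. fdiv p x b) ` Fp p \<subseteq> Fp p" using fdiv_char(1)[OF p b] by blast
  show "(\<lambda>y. (b * y) mod p) ` Fp p \<subseteq> Fp p" using mod_in_Fp[OF p] by blast
qed

lemma sum_dil:
  assumes p: "prime (p::int)" and b: "b \<in> Fp_star p"
  shows "(\<Sum>x\<in>Fp p. F (dil p b f x)) = (\<Sum>x\<in>Fp p. F (f x))"
  unfolding dil_def using sum.reindex_bij_betw[OF fdiv_bij[OF p b], of "\<lambda>x. F (f x)"] by simp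

lemma dilset_mem:
  assumes p: "prime (p::int)" and b: "b \<in> Fp_star p" and D: "D \<subseteq> Fp p" and z: "z \<in> Fp p"
  shows "z \<in> dilset p b D \<longleftrightarrow> fdiv p z b \<in> D"
proof
  assume "z \<in> dilset p b D"
  then obtain a where "a \<in> D" "z = (b*a) mod p" unfolding dilset_def by auto
  then show "fdiv p z b \<in> D" using fdiv_mul[OF p b] D by auto
next
  assume "fdiv p z b \<in> D"
  then show "z \<in> dilset p b D" unfolding dilset_def using mul_fdiv[OF p b z] by force
qed

lemma card_dilset:
  assumes p: "prime (p::int)" and b: "b \<in> Fp_star p" and D: "D \<subseteq> Fp p"
  shows "card (dilset p b D) = card D"
  unfolding dilset_def
proof (rule card_image)
  show "inj_on (\<lambda>a. (b * a) mod p) D"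
    by (rule inj_onI) (metis D fdiv_mul[OF p b] subsetD)
qed

lemma dilset_sub: "prime (p::int) \<Longrightarrow> dilset p b D \<subseteq> Fp p"
  unfolding dilset_def using mod_in_Fp by blast

lemma transl_bij:
  assumes p: "prime (p::int)"
  shows "bij_betw (\<lambda>x. (x - y) mod p) (Fp p) (Fp p)"
proof (rule bij_betw_byWitness[where f' = "\<lambda>x. (x + y) mod p"])
  show "\<forall>a\<in>Fp p. ((a - y) mod p + y) mod p = a" by (simp add: in_Fp_mod mod_add_left_eq)
  show "\<forall>a\<in>Fp p. ((a + y) mod p - y) mod p = a" by (simp add: in_Fp_mod mod_diff_left_eq)
  show "(\<lambda>x. (x - y) mod p) ` Fp p \<subseteq> Fp p" using mod_in_Fp[OF p] by blast
  show "(\<lambda>x. (x + y) mod p) ` Fp p \<subseteq> Fp p" using mod_in_Fp[OF p] by blast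
qed

lemma sum_transl:
  assumes p: "prime (p::int)"
  shows "(\<Sum>x\<in>Fp p. F ((x - y) mod p)) = (\<Sum>x\<in>Fp p. F x)"
  using sum.reindex_bij_betw[OF transl_bij[OF p, of y], of F] by simp

lemma refl_bij:
  assumes p: "prime (p::int)"
  shows "bij_betw (\<lambda>z. (x - z) mod p) (Fp p) (Fp p)"
proof (rule bij_betw_byWitness[where f' = "\<lambda>z. (x - z) mod p"])
  show "\<forall>a\<in>Fp p. (x - (x - a) mod p) mod p = a" by (simp add: in_Fp_mod mod_diff_right_eq)
  then show "\<forall>a\<in>Fp p. (x - (x - a) mod p) mod p = a" .
  show "(\<lambda>z. (x - z) mod p) ` Fp p \<subseteq> Fp p" using mod_in_Fp[OF p] by blast
  then show "(\<lambda>z. (x - z) mod p) ` Fp p \<subseteq> Fp p" .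
qed

lemma conv_comm:
  assumes p: "prime (p::int)"
  shows "conv p f g x = conv p g f x"
proof -
  have "conv p g f x = (\<Sum>y\<in>Fp p. g y * f ((x - y) mod p))" unfolding conv_def ..
  also have "\<dots> = (\<Sum>z\<in>Fp p. g ((x - z) mod p) * f ((x - (x - z) mod p) mod p))"
    using sum.reindex_bij_betw[OF refl_bij[OF p, of x], of "\<lambda>y. g y * f ((x - y) mod p)"] by simp
  also have "\<dots> = (\<Sum>z\<in>Fp p. f z * g ((x - z) mod p))"
    by (rule sum.cong) (auto simp: in_Fp_mod mod_diff_right_eq)
  finally show ?thesis unfolding conv_def by simp
qed



lemma norm2_L2: "norm2 p f = L2_set f (Fp p)"
  unfolding norm2_def L2_set_def by simp

lemma norm2_nonneg: "0 \<le> norm2 p f" unfolding norm2_L2 by simp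

lemma norm2_sq: "(norm2 p f)\<^sup>2 = (\<Sum>x\<in>Fp p. (f x)\<^sup>2)"
  unfolding norm2_def by (simp add: sum_nonneg)

lemma norm2_dil:
  assumes p: "prime (p::int)" and b: "b \<in> Fp_star p"
  shows "norm2 p (dil p b f) = norm2 p f"
  unfolding norm2_def using sum_dil[OF p b, of "\<lambda>t. \<bar>t\<bar>^2" f] by simp

lemma sum_dil1:
  assumes p: "prime (p::int)" and b: "b \<in> Fp_star p"
  shows "(\<Sum>x\<in>Fp p. dil p b f x) = (\<Sum>x\<in>Fp p. f x)"
  using sum_dil[OF p b, of "\<lambda>t. t" f] by simp

lemma norm2_triangle: "norm2 p (\<lambda>x. f x + g x) \<le> norm2 p f + norm2 p g"
  unfolding norm2_L2 by (rule L2_set_triangle_ineq)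

lemma norm2_mono:
  assumes "\<And>x. x \<in> Fp p \<Longrightarrow> \<bar>f x\<bar> \<le> g x"
  shows "norm2 p f \<le> norm2 p g"
proof -
  have "norm2 p f = L2_set (\<lambda>x. \<bar>f x\<bar>) (Fp p)" unfolding norm2_def L2_set_def by simp
  also have "\<dots> \<le> L2_set g (Fp p)" by (rule L2_set_mono) (use assms in auto)
  finally show ?thesis unfolding norm2_L2 .
qed

lemma norm2_scale: "0 \<le> c \<Longrightarrow> norm2 p (\<lambda>x. c * f x) = c * norm2 p f"
  unfolding norm2_def by (simp add: abs_mult power_mult_distrib sum_distrib_left[symmetric] real_sqrt_mult)

lemma conv_add_left: "conv p (\<lambda>x. f x + g x) h x = conv p f h x + conv p g h x"
  unfolding conv_def by (simp add: distrib_right sum.distrib)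

lemma conv_add_right: "conv p h (\<lambda>x. f x + g x) x = conv p h f x + conv p h g x"
  unfolding conv_def by (simp add: distrib_left sum.distrib)

lemma dil_add: "dil p b (\<lambda>x. f x + g x) = (\<lambda>x. dil p b f x + dil p b g x)"
  unfolding dil_def by simp

lemma conv_nonneg:
  assumes p: "prime (p::int)" and "\<And>y. y \<in> Fp p \<Longrightarrow> 0 \<le> f y" "\<And>y. y \<in> Fp p \<Longrightarrow> 0 \<le> g y"
  shows "0 \<le> conv p f g x"
  unfolding conv_def using assms mod_in_Fp[OF p] by (intro sum_nonneg mult_nonneg_nonneg) auto

lemma young1:
  fixes f g :: "int \<Rightarrow> real"
  assumes p: "prime (p::int)" and f: "\<And>y. y \<in> Fp p \<Longrightarrow> 0 \<le> f y"
  shows "norm2 p (conv p f g) \<le> (\<Sum>y\<in>Fp p. f y) * norm2 p g"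
proof -
  define F where "F = (\<Sum>y\<in>Fp p. f y)"
  have F0: "0 \<le> F" unfolding F_def using f by (simp add: sum_nonneg)
  have pt: "(conv p f g x)\<^sup>2 \<le> F * (\<Sum>y\<in>Fp p. f y * (g ((x - y) mod p))\<^sup>2)" for x
  proof -
    have "(conv p f g x)\<^sup>2 = (\<Sum>y\<in>Fp p. sqrt (f y) * (sqrt (f y) * g ((x - y) mod p)))\<^sup>2"
      unfolding conv_def
      by (rule arg_cong[where f = "\<lambda>t. t\<^sup>2"], rule sum.cong) (auto simp: f mult.assoc[symmetric])
    also have "\<dots> \<le> (\<Sum>y\<in>Fp p. (sqrt (f y))\<^sup>2) * (\<Sum>y\<in>Fp p. (sqrt (f y) * g ((x - y) mod p))\<^sup>2)"
      by (rule Cauchy_Schwarz_ineq_sum)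
    also have "\<dots> = F * (\<Sum>y\<in>Fp p. f y * (g ((x - y) mod p))\<^sup>2)"
      unfolding F_def using f by (simp add: power_mult_distrib)
    finally show ?thesis .
  qed
  have "(norm2 p (conv p f g))\<^sup>2 = (\<Sum>x\<in>Fp p. (conv p f g x)\<^sup>2)" by (rule norm2_sq)
  also have "\<dots> \<le> (\<Sum>x\<in>Fp p. F * (\<Sum>y\<in>Fp p. f y * (g ((x - y) mod p))\<^sup>2))"
    by (rule sum_mono) (rule pt)
  also have "\<dots> = F * (\<Sum>y\<in>Fp p. f y * (\<Sum>x\<in>Fp p. (g ((x - y) mod p))\<^sup>2))"
    by (simp add: sum_distrib_left[symmetric] sum.swap[of _ "Fp p" "Fp p"])
  also have "\<dots> = F * (\<Sum>y\<in>Fp p. f y * (\<Sum>x\<in>Fp p. (g x)\<^sup>2))"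
    using sum_transl[OF p, of "\<lambda>t. (g t)\<^sup>2"] by simp
  also have "\<dots> = F * F * (\<Sum>x\<in>Fp p. (g x)\<^sup>2)"
    by (simp add: sum_distrib_right[symmetric] F_def)
  also have "\<dots> = (F * norm2 p g)\<^sup>2"
    using norm2_sq[of p g] by (simp add: power_mult_distrib power2_eq_square)
  finally have "(norm2 p (conv p f g))\<^sup>2 \<le> (F * norm2 p g)\<^sup>2" .
  then show ?thesis unfolding F_def[symmetric]
    using F0 norm2_nonneg[of p g] by (simp add: power2_le_iff_abs_le)
qed

lemma young2:
  fixes f g :: "int \<Rightarrow> real"
  assumes p: "prime (p::int)" and g: "\<And>y. y \<in> Fp p \<Longrightarrow> 0 \<le> g y"
  shows "norm2 p (conv p f g) \<le> norm2 p f * (\<Sum>y\<in>Fp p. g y)"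
proof -
  have "conv p f g = conv p g f" by (rule ext, rule conv_comm[OF p])
  then show ?thesis using young1[where f=g and g=f, OF p g] by (simp add: mult.commute)
qed



lemma energy_finite: "finite {(a1, b1, a2, b2). a1 \<in> A \<and> b1 \<in> B \<and> a2 \<in> A \<and> b2 \<in> B \<and>
      (a1 + b1) mod p = (a2 + b2) mod (p::int)}" if "finite A" "finite B"
proof -
  have "{(a1, b1, a2, b2). a1 \<in> A \<and> b1 \<in> B \<and> a2 \<in> A \<and> b2 \<in> B \<and>
      (a1 + b1) mod p = (a2 + b2) mod (p::int)} \<subseteq> A \<times> B \<times> A \<times> B" by auto
  then show ?thesis using finite_subset that by blast
qed

lemma sum_r_sq_le_energy:
  assumes p: "prime (p::int)" and b: "b \<in> Fp_star p" and D: "D \<subseteq> Fp p"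
  shows "(\<Sum>x\<in>Fp p. (real (card {y\<in>D. fdiv p ((x - y) mod p) b \<in> D}))\<^sup>2)
          \<le> real (add_energy p D (dilset p b D))"
proof -
  define R where "R x = {y\<in>D. fdiv p ((x - y) mod p) b \<in> D}" for x
  have finD: "finite D" using D Fp_finite finite_subset by blast
  have finR: "finite (R x)" for x unfolding R_def using finD by auto
  define E where "E = {(a1, b1, a2, b2). a1 \<in> D \<and> b1 \<in> dilset p b D \<and> a2 \<in> D \<and> b2 \<in> dilset p b D \<and>
      (a1 + b1) mod p = (a2 + b2) mod p}"
  have finE: "finite E" unfolding E_def
    by (rule energy_finite) (use finD in \<open>auto simp: dilset_def\<close>)
  define \<phi> where "\<phi> = (\<lambda>(x::int, (y1::int, y2::int)). (y1, (x - y1) mod p, y2, (x - y2) mod p))"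
  have key: "(y + (x - y) mod p) mod p = x" if "x \<in> Fp p" for x y
    using that by (simp add: mod_add_right_eq in_Fp_mod)
  have inj: "inj_on \<phi> (Sigma (Fp p) (\<lambda>x. R x \<times> R x))"
  proof (rule inj_onI)
    fix u v assume u: "u \<in> Sigma (Fp p) (\<lambda>x. R x \<times> R x)" and v: "v \<in> Sigma (Fp p) (\<lambda>x. R x \<times> R x)"
      and e: "\<phi> u = \<phi> v"
    obtain x y1 y2 where ux: "u = (x, y1, y2)" "x \<in> Fp p" using u by auto
    obtain x' y1' y2' where vx: "v = (x', y1', y2')" "x' \<in> Fp p" using v by auto
    have e2: "\<phi> (x, y1, y2) = \<phi> (x', y1', y2')" using e ux vx by simp
    have "y1 = y1'" using e2 by (simp add: \<phi>_def)
    have "y2 = y2'" using e2 by (simp add: \<phi>_def)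
    have "(x - y1) mod p = (x' - y1') mod p" using e2 unfolding \<phi>_def case_prod_conv prod.inject by blast
    then have "(y1 + (x - y1) mod p) mod p = (y1' + (x' - y1') mod p) mod p" using \<open>y1 = y1'\<close> by simp
    then have "x = x'" using key[OF ux(2), of y1] key[OF vx(2), of y1'] by simp
    then show "u = v" using ux vx \<open>y1 = y1'\<close> \<open>y2 = y2'\<close> by simp
  qed
  have img: "\<phi> ` (Sigma (Fp p) (\<lambda>x. R x \<times> R x)) \<subseteq> E"
  proof
    fix w assume "w \<in> \<phi> ` (Sigma (Fp p) (\<lambda>x. R x \<times> R x))"
    then obtain x y1 y2 where x: "x \<in> Fp p" and y1: "y1 \<in> R x" and y2: "y2 \<in> R x"
      and w: "w = \<phi> (x, y1, y2)" by blast
    have m1: "(x - y1) mod p \<in> dilset p b D"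
      using y1 dilset_mem[OF p b D mod_in_Fp[OF p]] unfolding R_def by auto
    have m2: "(x - y2) mod p \<in> dilset p b D"
      using y2 dilset_mem[OF p b D mod_in_Fp[OF p]] unfolding R_def by auto
    have d1: "y1 \<in> D" "y2 \<in> D" using y1 y2 unfolding R_def by auto
    have "(y1 + (x - y1) mod p) mod p = (y2 + (x - y2) mod p) mod p"
      using key[OF x, of y1] key[OF x, of y2] by simp
    then show "w \<in> E" unfolding w E_def \<phi>_def using m1 m2 d1 by simp
  qed
  have "(\<Sum>x\<in>Fp p. (real (card (R x)))\<^sup>2) = real (\<Sum>x\<in>Fp p. card (R x \<times> R x))"
    by (simp add: card_cartesian_product power2_eq_square)
  also have "\<dots> = real (card (Sigma (Fp p) (\<lambda>x. R x \<times> R x)))"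
    by (subst card_SigmaI) (auto simp: finR)
  also have "\<dots> \<le> real (card E)"
    using card_inj_on_le[OF inj img finE] by simp
  finally show ?thesis unfolding R_def E_def add_energy_def .
qed

lemma conv_energy:
  assumes p: "prime (p::int)" and b: "b \<in> Fp_star p" and D: "D \<subseteq> Fp p" and T: "0 \<le> T"
    and f: "\<And>x. x \<in> Fp p \<Longrightarrow> 0 \<le> f x \<and> f x \<le> (if x \<in> D then T else 0)"
    and g: "\<And>x. x \<in> Fp p \<Longrightarrow> 0 \<le> g x \<and> g x \<le> (if x \<in> D then T else 0)"
  shows "norm2 p (conv p f (dil p b g)) \<le> T\<^sup>2 * sqrt (real (add_energy p D (dilset p b D)))"
proof -
  define r where "r x = real (card {y\<in>D. fdiv p ((x - y) mod p) b \<in> D})" for x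
  have fd: "fdiv p z b \<in> Fp p" for z using fdiv_char(1)[OF p b] by blast
  have pt: "\<bar>conv p f (dil p b g) x\<bar> \<le> T\<^sup>2 * r x" for x
  proof -
    have nn: "0 \<le> conv p f (dil p b g) x"
      by (rule conv_nonneg[OF p]) (use f g fd in \<open>auto simp: dil_def\<close>)
    have "conv p f (dil p b g) x = (\<Sum>y\<in>Fp p. f y * g (fdiv p ((x - y) mod p) b))"
      unfolding conv_def dil_def ..
    also have "\<dots> \<le> (\<Sum>y\<in>Fp p. if y \<in> D \<and> fdiv p ((x - y) mod p) b \<in> D then T\<^sup>2 else 0)"
    proof (rule sum_mono)
      fix y assume y: "y \<in> Fp p"
      have fy: "0 \<le> f y \<and> f y \<le> (if y \<in> D then T else 0)" using f[OF y] .
      have gy: "0 \<le> g (fdiv p ((x - y) mod p) b) \<and> g (fdiv p ((x - y) mod p) b) \<le>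
          (if fdiv p ((x - y) mod p) b \<in> D then T else 0)" using g[OF fd] .
      show "f y * g (fdiv p ((x - y) mod p) b) \<le> (if y \<in> D \<and> fdiv p ((x - y) mod p) b \<in> D then T\<^sup>2 else 0)"
        using fy gy T by (auto simp: power2_eq_square intro: mult_mono)
    qed
    also have "\<dots> = (\<Sum>y\<in>{y\<in>Fp p. y \<in> D \<and> fdiv p ((x - y) mod p) b \<in> D}. T\<^sup>2)"
      by (rule sum.inter_filter[symmetric]) simp
    also have "{y\<in>Fp p. y \<in> D \<and> fdiv p ((x - y) mod p) b \<in> D} = {y\<in>D. fdiv p ((x - y) mod p) b \<in> D}"
      using D by auto
    finally show ?thesis using nn unfolding r_def by (simp add: mult.commute)
  qed
  have "norm2 p (conv p f (dil p b g)) \<le> norm2 p (\<lambda>x. T\<^sup>2 * r x)"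
    by (rule norm2_mono) (rule pt)
  also have "\<dots> = T\<^sup>2 * norm2 p r" by (rule norm2_scale) simp
  also have "norm2 p r = sqrt (\<Sum>x\<in>Fp p. (r x)\<^sup>2)" unfolding norm2_def by simp
  also have "\<dots> \<le> sqrt (real (add_energy p D (dilset p b D)))"
    unfolding r_def by (rule real_sqrt_le_mono, rule sum_r_sq_le_energy[OF p b D])
  finally show ?thesis using T by (simp add: mult_left_mono)
qed



lemma extend_subset:
  assumes "finite B" "A \<subseteq> B" "card A \<le> d" "d \<le> card B"
  shows "\<exists>S. A \<subseteq> S \<and> S \<subseteq> B \<and> card S = d"
proof -
  have fA: "finite A" using assms finite_subset by blast
  have "card (B - A) = card B - card A" using assms fA by (simp add: card_Diff_subset)
  then have "d - card A \<le> card (B - A)" using assms by linarith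
  then obtain T where T: "T \<subseteq> B - A" "card T = d - card A" "finite T"
    using obtain_subset_with_card_n by metis
  have "card (A \<union> T) = card A + card T" using T fA by (subst card_Un_disjoint) auto
  then have "card (A \<union> T) = d" using T assms by simp
  then show ?thesis using T assms by (intro exI[of _ "A \<union> T"]) auto
qed

lemma chunk:
  fixes f :: "'a \<Rightarrow> real"
  assumes "finite B" "1 \<le> d" "d \<le> card B" "\<And>x. x \<in> B \<Longrightarrow> 0 \<le> f x"
    "\<And>S. S \<subseteq> B \<Longrightarrow> card S = d \<Longrightarrow> sum f S \<le> V"
  shows "sum f B \<le> 2 * real (card B) / real d * V"
  using assms
proof (induction "card B" arbitrary: B rule: less_induct)
  case less
  obtain S1 where S1: "S1 \<subseteq> B" "card S1 = d" "finite S1"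
    using obtain_subset_with_card_n[OF less.prems(3)] by metis
  have V0: "0 \<le> V" using less.prems(5)[OF S1(1,2)] sum_nonneg[of S1 f] less.prems(4) S1(1) by force
  have split: "sum f B = sum f S1 + sum f (B - S1)"
    using S1 less.prems(1) by (metis add.commute sum.subset_diff)
  have cB: "card (B - S1) = card B - d" using S1 less.prems(1) by (simp add: card_Diff_subset)
  show ?case
  proof (cases "card B < 2 * d")
    case True
    have "card (B - S1) \<le> d" using cB True by linarith
    then obtain S2 where S2: "B - S1 \<subseteq> S2" "S2 \<subseteq> B" "card S2 = d"
      using extend_subset[OF less.prems(1) Diff_subset _ less.prems(3)] by blast
    have "sum f (B - S1) \<le> sum f S2"
      by (rule sum_mono2) (use S2 less.prems(1,4) finite_subset in auto)
    also have "\<dots> \<le> V" using less.prems(5)[OF S2(2,3)] .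
    finally have "sum f B \<le> 2 * V" using split less.prems(5)[OF S1(1,2)] by linarith
    also have "\<dots> \<le> 2 * real (card B) / real d * V"
    proof -
      have "1 \<le> real (card B) / real d" using less.prems(2,3) by simp
      then have "2 * 1 * V \<le> 2 * (real (card B) / real d) * V"
        using V0 by (intro mult_right_mono mult_left_mono) auto
      then show ?thesis by simp
    qed
    finally show ?thesis .
  next
    case False
    have lt: "card (B - S1) < card B" using cB less.prems(2,3) by simp
    have IH: "sum f (B - S1) \<le> 2 * real (card (B - S1)) / real d * V"
      by (rule less.hyps[OF lt]) (use less.prems False cB in auto)
    have d0: "0 < real d" using less.prems(2) by simp
    have "sum f B \<le> V + 2 * real (card B - d) / real d * V"
      using split less.prems(5)[OF S1(1,2)] IH cB by simp
    also have "\<dots> = (2 * real (card B) / real d - 1) * V"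
      using d0 less.prems(3) by (simp add: field_simps of_nat_diff)
    also have "\<dots> \<le> 2 * real (card B) / real d * V" using V0 by (simp add: algebra_simps)
    finally show ?thesis .
  qed
qed

lemma geo_up:
  fixes r :: real
  assumes "1 < r" "finite S" "S \<subseteq> {..m}"
  shows "(\<Sum>k\<in>S. r ^ k) \<le> r ^ Suc m / (r - 1)"
proof -
  have "(\<Sum>k\<in>S. r ^ k) \<le> (\<Sum>k<Suc m. r ^ k)"
    by (rule sum_mono2) (use assms in auto)
  also have "\<dots> = (r ^ Suc m - 1) / (r - 1)" by (rule geometric_sum) (use assms in simp)
  also have "\<dots> \<le> r ^ Suc m / (r - 1)" using assms by (simp add: divide_right_mono)
  finally show ?thesis .
qed

lemma geo_down:
  fixes \<rho> :: real
  assumes "0 \<le> \<rho>" "\<rho> < 1" "finite S" "S \<subseteq> {m..}"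
  shows "(\<Sum>k\<in>S. \<rho> ^ k) \<le> \<rho> ^ m / (1 - \<rho>)"
proof -
  obtain n where n: "S \<subseteq> {..<n}" using finite_nat_bounded[OF assms(3)] by blast
  have sub: "S \<subseteq> {0 + m..<n + m}"
  proof
    fix x assume "x \<in> S"
    then have "x < n" "m \<le> x" using n assms(4) by auto
    then show "x \<in> {0 + m..<n + m}" by simp
  qed
  have "(\<Sum>k\<in>S. \<rho> ^ k) \<le> (\<Sum>k\<in>{0 + m..<n + m}. \<rho> ^ k)"
    by (rule sum_mono2) (use sub assms in auto)
  also have "\<dots> = (\<Sum>i\<in>{0..<n}. \<rho> ^ (i + m))" by (rule sum.shift_bounds_nat_ivl)
  also have "\<dots> = \<rho> ^ m * (\<Sum>i<n. \<rho> ^ i)"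
    by (simp add: power_add sum_distrib_left atLeast0LessThan mult.commute)
  also have "(\<Sum>i<n. \<rho> ^ i) = (1 - \<rho> ^ n) / (1 - \<rho>)"
    using geometric_sum[of \<rho> n] assms by (simp add: field_simps)
  also have "\<rho> ^ m * ((1 - \<rho> ^ n) / (1 - \<rho>)) \<le> \<rho> ^ m / (1 - \<rho>)"
  proof -
    have "(1 - \<rho> ^ n) / (1 - \<rho>) \<le> 1 / (1 - \<rho>)"
      using assms by (simp add: divide_right_mono)
    then have "\<rho> ^ m * ((1 - \<rho> ^ n) / (1 - \<rho>)) \<le> \<rho> ^ m * (1 / (1 - \<rho>))"
      by (rule mult_left_mono) (use assms in simp)
    then show ?thesis by simp
  qed
  finally show ?thesis .
qed

lemma pow2_powr: "(2::real) ^ k = 2 powr (real k)" by (simp add: powr_realpow)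
lemma powr_pow: "((2::real) powr a) ^ k = 2 powr (a * real k)"
  by (simp add: powr_realpow[symmetric] powr_powr)

definition CG :: "real \<Rightarrow> real" where
  "CG c = 4 * (2 powr (1 - c)) / (2 powr (1 - c) - 1) + 2 / (1 - 2 powr (- c / 2))"

lemma level_sum:
  fixes c L :: real and s :: "nat \<Rightarrow> real" and T :: "nat set"
  assumes c: "0 < c" "c < 1" and L: "0 < L" "L \<le> 1" and T: "finite T"
    and s: "\<And>k. k \<in> T \<Longrightarrow> 0 \<le> s k \<and> s k \<le> 2 ^ (k + 1) \<and> s k \<le> 4 ^ (k + 1) * L"
  shows "(\<Sum>k\<in>T. s k powr (1 - c / 2) / 2 ^ k) \<le> CG c * L powr (c / 2)"
proof -
  define \<gamma> where "\<gamma> = 1 - c / 2"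
  define r where "r = (2::real) powr (1 - c)"
  define \<rho> where "\<rho> = (2::real) powr (- c / 2)"
  have r1: "1 < r" unfolding r_def using c by simp
  have \<rho>0: "0 \<le> \<rho>" "\<rho> < 1" unfolding \<rho>_def using c powr_less_mono[of "-c/2" 0 2] by auto
  have \<gamma>: "0 < \<gamma>" "\<gamma> \<le> 1" unfolding \<gamma>_def using c by auto
  define k1 where "k1 = nat \<lfloor>log 2 (1 / L)\<rfloor>"
  have lg0: "0 \<le> log 2 (1 / L)" using L by simp
  have k1a: "2 powr (real k1) \<le> 1 / L"
  proof -
    have "real k1 \<le> log 2 (1 / L)" unfolding k1_def using lg0 by linarith
    then show ?thesis using L le_log_iff[of 2 "1/L" "real k1"] by simp
  qed
  have k1b: "1 / L < 2 powr (real k1 + 1)"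
  proof -
    have "log 2 (1 / L) < real k1 + 1" unfolding k1_def using lg0 by linarith
    then show ?thesis using L log_less_iff[of 2 "1/L" "real k1 + 1"] by simp
  qed
  have t1: "s k powr \<gamma> / 2 ^ k \<le> 4 * L powr \<gamma> * r ^ k" if "k \<in> T" for k
  proof -
    have "s k powr \<gamma> \<le> (4 ^ (k + 1) * L) powr \<gamma>" using s[OF that] \<gamma> by (intro powr_mono2) auto
    also have "(4 ^ (k + 1) * L) powr \<gamma> = 4 powr \<gamma> * (2 powr (2 * real k * \<gamma>)) * L powr \<gamma>"
    proof -
      have "(4::real) ^ (k + 1) = 4 * 2 powr (2 * real k)"
        by (simp add: powr_realpow[symmetric] powr_powr[symmetric] power_mult[symmetric]
            flip: powr_realpow)
      then show ?thesis using L by (simp add: powr_mult powr_powr mult.assoc)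
    qed
    finally have "s k powr \<gamma> / 2 ^ k \<le> 4 powr \<gamma> * (2 powr (2 * real k * \<gamma>)) * L powr \<gamma> / 2 powr real k"
      by (simp add: pow2_powr divide_right_mono)
    also have "\<dots> = 4 powr \<gamma> * L powr \<gamma> * r ^ k"
    proof -
      have "2 powr (2 * real k * \<gamma>) / 2 powr real k = (2::real) powr ((1 - c) * real k)"
        by (simp add: powr_diff[symmetric] \<gamma>_def algebra_simps)
      then show ?thesis unfolding r_def powr_pow by (simp add: field_simps)
    qed
    also have "\<dots> \<le> 4 * L powr \<gamma> * r ^ k"
    proof -
      have "(4::real) powr \<gamma> \<le> 4 powr 1" using \<gamma> by (intro powr_mono) auto
      then show ?thesis using r1 by (intro mult_right_mono) auto
    qed
    finally show ?thesis .
  qed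
  have t2: "s k powr \<gamma> / 2 ^ k \<le> 2 * \<rho> ^ k" if "k \<in> T" for k
  proof -
    have "s k powr \<gamma> \<le> (2 ^ (k + 1)) powr \<gamma>" using s[OF that] \<gamma> by (intro powr_mono2) auto
    also have "(2 ^ (k + 1)) powr \<gamma> = (2::real) powr ((real k + 1) * \<gamma>)"
      by (subst pow2_powr) (simp add: powr_powr add.commute)
    finally have "s k powr \<gamma> / 2 ^ k \<le> 2 powr ((real k + 1) * \<gamma>) / 2 powr real k"
      by (simp add: pow2_powr divide_right_mono)
    also have "\<dots> = 2 powr \<gamma> * \<rho> ^ k"
    proof -
      have e: "(real k + 1) * \<gamma> - real k = \<gamma> + (- c / 2) * real k"
        unfolding \<gamma>_def by (simp add: field_simps)
      have "(2::real) powr ((real k + 1) * \<gamma>) / 2 powr real k = 2 powr (\<gamma> + (- c / 2) * real k)"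
        by (simp only: powr_diff[symmetric] e)
      also have "\<dots> = 2 powr \<gamma> * 2 powr ((- c / 2) * real k)" by (rule powr_add)
      finally show ?thesis unfolding \<rho>_def powr_pow .
    qed
    also have "\<dots> \<le> 2 * \<rho> ^ k"
    proof -
      have "(2::real) powr \<gamma> \<le> 2 powr 1" using \<gamma> by (intro powr_mono) auto
      then show ?thesis using \<rho>0 by (intro mult_right_mono) auto
    qed
    finally show ?thesis .
  qed
  define T1 where "T1 = T \<inter> {..k1}"
  define T2 where "T2 = T - {..k1}"
  have "(\<Sum>k\<in>T. s k powr \<gamma> / 2 ^ k) = (\<Sum>k\<in>T1. s k powr \<gamma> / 2 ^ k) + (\<Sum>k\<in>T2. s k powr \<gamma> / 2 ^ k)"
    unfolding T1_def T2_def using T by (rule sum.Int_Diff)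
  also have "(\<Sum>k\<in>T1. s k powr \<gamma> / 2 ^ k) \<le> (\<Sum>k\<in>T1. 4 * L powr \<gamma> * r ^ k)"
    by (rule sum_mono) (use t1 T1_def in auto)
  also have "\<dots> = 4 * L powr \<gamma> * (\<Sum>k\<in>T1. r ^ k)" by (simp add: sum_distrib_left)
  also have "\<dots> \<le> 4 * L powr \<gamma> * (r ^ Suc k1 / (r - 1))"
    by (rule mult_left_mono, rule geo_up) (use r1 T T1_def in auto)
  also have "\<dots> \<le> 4 * r / (r - 1) * L powr (c / 2)"
  proof -
    have "r ^ Suc k1 = r * (2 powr real k1) powr (1 - c)"
      unfolding r_def by (simp add: powr_pow powr_powr mult.commute)
    also have "\<dots> \<le> r * (1 / L) powr (1 - c)"
      using k1a r1 c by (intro mult_left_mono powr_mono2) auto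
    finally have a: "r ^ Suc k1 \<le> r * (1 / L) powr (1 - c)" .
    have b: "L powr \<gamma> * (1 / L) powr (1 - c) = L powr (c / 2)"
      using L by (simp add: powr_divide powr_diff[symmetric] \<gamma>_def field_simps)
    have "4 * L powr \<gamma> * (r ^ Suc k1 / (r - 1)) \<le> 4 * L powr \<gamma> * (r * (1 / L) powr (1 - c) / (r - 1))"
      using a r1 by (intro mult_left_mono divide_right_mono) auto
    also have "\<dots> = 4 * r / (r - 1) * (L powr \<gamma> * (1 / L) powr (1 - c))" by (simp add: field_simps)
    finally show ?thesis using b by simp
  qed
  also have "(\<Sum>k\<in>T2. s k powr \<gamma> / 2 ^ k) \<le> (\<Sum>k\<in>T2. 2 * \<rho> ^ k)"
    by (rule sum_mono) (use t2 T2_def in auto)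
  also have "\<dots> = 2 * (\<Sum>k\<in>T2. \<rho> ^ k)" by (simp add: sum_distrib_left)
  also have "\<dots> \<le> 2 * (\<rho> ^ Suc k1 / (1 - \<rho>))"
    by (rule mult_left_mono, rule geo_down) (use \<rho>0 T T2_def in auto)
  also have "\<dots> \<le> 2 / (1 - \<rho>) * L powr (c / 2)"
  proof -
    have "\<rho> ^ Suc k1 = 2 powr ((- c / 2) * real (Suc k1))" unfolding \<rho>_def by (rule powr_pow)
    also have "\<dots> = (2 powr (real k1 + 1)) powr (- c / 2)" by (simp add: powr_powr mult.commute add.commute)
    also have "\<dots> \<le> (1 / L) powr (- c / 2)"
      using k1b L c by (intro powr_mono2') auto
    also have "\<dots> = L powr (c / 2)" using L by (simp add: powr_divide powr_minus_divide)
    finally have "\<rho> ^ Suc k1 \<le> L powr (c / 2)" .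
    then show ?thesis using \<rho>0 by (simp add: divide_right_mono)
  qed
  finally show ?thesis unfolding CG_def r_def \<rho>_def \<gamma>_def by (simp add: algebra_simps)
qed



lemma sum_sqrt_le:
  fixes E :: "'a \<Rightarrow> real"
  assumes "finite B" "\<And>b. b \<in> B \<Longrightarrow> 0 \<le> E b"
  shows "(\<Sum>b\<in>B. sqrt (E b)) \<le> sqrt (real (card B)) * sqrt (\<Sum>b\<in>B. E b)"
proof -
  have "(\<Sum>b\<in>B. 1 * sqrt (E b))\<^sup>2 \<le> (\<Sum>b\<in>B. 1\<^sup>2) * (\<Sum>b\<in>B. (sqrt (E b))\<^sup>2)"
    by (rule Cauchy_Schwarz_ineq_sum)
  also have "\<dots> = real (card B) * (\<Sum>b\<in>B. E b)" using assms by simp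
  finally have "(\<Sum>b\<in>B. sqrt (E b))\<^sup>2 \<le> real (card B) * (\<Sum>b\<in>B. E b)" by simp
  then have "(\<Sum>b\<in>B. sqrt (E b)) \<le> sqrt (real (card B) * (\<Sum>b\<in>B. E b))"
    by (rule real_le_rsqrt)
  then show ?thesis by (simp add: real_sqrt_mult)
qed

definition hypB :: "real \<Rightarrow> real \<Rightarrow> int \<Rightarrow> int set \<Rightarrow> (int \<Rightarrow> real) \<Rightarrow> bool" where
  "hypB c K p D E \<longleftrightarrow> (\<forall>B. B \<subseteq> Fp_star p \<and> B \<noteq> {} \<and> card B \<le> card D \<longrightarrow>
      (\<Sum>b\<in>B. E b) \<le> K * (min (real_of_int p / real (card D)) (real (card B))) powr (- c)
            * real (card D) ^ 3 * real (card B))"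

lemma small_bound:
  assumes hyp: "hypB c K p D E" and K: "0 \<le> K" and E0: "\<And>b. 0 \<le> E b"
    and B: "B \<subseteq> Fp_star p" "B \<noteq> {}" "card B \<le> card D" and p0: "0 < p"
  shows "(\<Sum>b\<in>B. sqrt (E b)) \<le> sqrt K * real (card D) powr (3/2) * real (card B)
            * (min (real_of_int p / real (card D)) (real (card B))) powr (- c / 2)"
proof -
  define m where "m = min (real_of_int p / real (card D)) (real (card B))"
  have fB: "finite B" using B(1) finite_subset Fp_star_finite by blast
  have "(\<Sum>b\<in>B. sqrt (E b)) \<le> sqrt (real (card B)) * sqrt (\<Sum>b\<in>B. E b)"
    by (rule sum_sqrt_le[OF fB]) (use E0 in auto)
  also have "\<dots> \<le> sqrt (real (card B)) * sqrt (K * m powr (- c) * real (card D) ^ 3 * real (card B))"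
    using hyp B unfolding hypB_def m_def by (intro mult_left_mono real_sqrt_le_mono) auto
  also have "\<dots> = sqrt K * sqrt (real (card D) ^ 3) * real (card B) * sqrt (m powr (- c))"
    by (simp add: real_sqrt_mult)
  also have "sqrt (real (card D) ^ 3) = real (card D) powr (3/2)"
  proof -
    have "real (card D) powr (3/2) = sqrt (real (card D) powr 3)"
      using powr_half_sqrt_powr[of "real (card D)" 3] by simp
    also have "real (card D) powr 3 = real (card D) ^ 3"
      using powr_realpow'[of "real (card D)" 3] by simp
    finally show ?thesis by simp
  qed
  also have "sqrt (m powr (- c)) = m powr (- c / 2)"
  proof -
    have "0 \<le> m" unfolding m_def using p0 by simp
    then show ?thesis using powr_half_sqrt_powr[of m "-c"] by simp
  qed
  finally show ?thesis unfolding m_def .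
qed

lemma set_bound:
  assumes hyp: "hypB c K p D E" and K: "0 \<le> K" and E0: "\<And>b. 0 \<le> E b" and c: "0 < c"
    and p: "prime p" and D: "D \<subseteq> Fp p" "D \<noteq> {}"
    and B: "B \<subseteq> Fp_star p" "B \<noteq> {}"
  shows "(\<Sum>b\<in>B. sqrt (E b)) \<le> 2 * sqrt K * real (card D) powr (3/2) * real (card B)
      * ((min (real_of_int p / real (card D)) (real (card D))) powr (- c / 2) + real (card B) powr (- c / 2))"
proof -
  define Q where "Q = min (real_of_int p / real (card D)) (real (card D))"
  define d where "d = real (card D)"
  have fD: "finite D" using D finite_subset Fp_finite by blast
  have fB: "finite B" using B(1) finite_subset Fp_star_finite by blast
  have d1: "1 \<le> card D" using fD D(2) by (simp add: Suc_le_eq card_gt_0_iff)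
  have cB: "1 \<le> card B" using fB B(2) by (simp add: Suc_le_eq card_gt_0_iff)
  have p0: "0 < real_of_int p" using prime_gt_1_int[OF p] by simp
  have Q0: "0 < Q" unfolding Q_def using p0 d1 by simp
  have min_le: "(min Q x) powr (- c / 2) \<le> Q powr (- c / 2) + x powr (- c / 2)" if "0 < x" for x
    using Q0 that by (cases "Q \<le> x") (auto simp: min_def)
  have SQ: "0 \<le> sqrt K * d powr (3/2)" using K by simp
  show ?thesis
  proof (cases "card B \<le> card D")
    case True
    have "(\<Sum>b\<in>B. sqrt (E b)) \<le> sqrt K * d powr (3/2) * real (card B)
            * (min (real_of_int p / d) (real (card B))) powr (- c / 2)"
      using small_bound[OF hyp K E0 B True] prime_gt_1_int[OF p] unfolding d_def by simp
    also have "(min (real_of_int p / d) (real (card B))) powr (- c / 2) \<le> (min Q (real (card B))) powr (- c / 2)"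
    proof (rule powr_mono2')
      show "- c / 2 \<le> 0" using c by simp
      show "0 < min Q (real (card B))" using Q0 cB by simp
      show "min Q (real (card B)) \<le> min (real_of_int p / d) (real (card B))"
        unfolding Q_def d_def by simp
    qed
    also have "\<dots> \<le> Q powr (- c / 2) + real (card B) powr (- c / 2)"
      using min_le cB by simp
    finally have "(\<Sum>b\<in>B. sqrt (E b)) \<le> sqrt K * d powr (3/2) * real (card B)
            * (Q powr (- c / 2) + real (card B) powr (- c / 2))"
      using SQ by (simp add: mult_left_mono)
    also have "\<dots> \<le> 2 * sqrt K * d powr (3/2) * real (card B) * (Q powr (- c / 2) + real (card B) powr (- c / 2))"
      using SQ by (simp add: mult_right_mono)
    finally show ?thesis unfolding Q_def d_def .
  next
    case False
    define V where "V = sqrt K * d powr (3/2) * d * Q powr (- c / 2)"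
    have "(\<Sum>b\<in>B. sqrt (E b)) \<le> 2 * real (card B) / real (card D) * V"
    proof (rule chunk[OF fB d1])
      show "card D \<le> card B" using False by simp
      show "0 \<le> sqrt (E b)" for b by (simp add: E0)
      fix S assume S: "S \<subseteq> B" "card S = card D"
      have S1: "S \<noteq> {}" using S d1 by auto
      have S2: "S \<subseteq> Fp_star p" using S B by auto
      have S3: "card S \<le> card D" using S by simp
      have pp: "0 < p" using prime_gt_1_int[OF p] by simp
      have "(\<Sum>b\<in>S. sqrt (E b)) \<le> sqrt K * real (card D) powr (3/2) * real (card S)
            * (min (real_of_int p / real (card D)) (real (card S))) powr (- c / 2)"
        by (rule small_bound[OF hyp K E0 S2 S1 S3 pp])
      then show "(\<Sum>b\<in>S. sqrt (E b)) \<le> V" unfolding V_def Q_def d_def using S by simp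
    qed
    also have "\<dots> = 2 * sqrt K * d powr (3/2) * real (card B) * Q powr (- c / 2)"
      unfolding V_def d_def using d1 by (simp add: field_simps)
    also have "\<dots> \<le> 2 * sqrt K * d powr (3/2) * real (card B) * (Q powr (- c / 2) + real (card B) powr (- c / 2))"
      using SQ by (intro mult_left_mono) auto
    finally show ?thesis unfolding Q_def d_def .
  qed
qed



lemma CG_pos: "0 < c \<Longrightarrow> c < 1 \<Longrightarrow> 0 < CG c"
proof -
  assume c: "0 < c" "c < 1"
  have r1: "1 < (2::real) powr (1 - c)" using c by simp
  have \<rho>: "(2::real) powr (- c / 2) < 1" using c powr_less_mono[of "-c/2" 0 2] by auto
  show ?thesis unfolding CG_def using r1 \<rho> by (intro add_pos_pos divide_pos_pos) auto
qed

lemma lev_bounds: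
  fixes x :: real
  assumes "0 < x" "x \<le> 1"
  shows "x \<le> 1 / 2 ^ nat \<lfloor>log 2 (1 / x)\<rfloor>" "1 / 2 ^ (nat \<lfloor>log 2 (1 / x)\<rfloor> + 1) < x"
proof -
  define k where "k = nat \<lfloor>log 2 (1 / x)\<rfloor>"
  have lg0: "0 \<le> log 2 (1 / x)" using assms by simp
  have "real k \<le> log 2 (1 / x)" unfolding k_def using lg0 by linarith
  then have "2 powr (real k) \<le> 1 / x" using assms le_log_iff[of 2 "1/x" "real k"] by simp
  then have "2 ^ k \<le> 1 / x" by (simp add: pow2_powr)
  then show "x \<le> 1 / 2 ^ nat \<lfloor>log 2 (1 / x)\<rfloor>" unfolding k_def[symmetric] using assms
    by (simp add: field_simps)
  have "log 2 (1 / x) < real k + 1" unfolding k_def using lg0 by linarith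
  then have "1 / x < 2 powr (real k + 1)" using assms log_less_iff[of 2 "1/x" "real k + 1"] by simp
  then have "1 / x < 2 ^ (k + 1)" using pow2_powr[of "k+1"] by (simp add: add.commute)
  then show "1 / 2 ^ (nat \<lfloor>log 2 (1 / x)\<rfloor> + 1) < x" unfolding k_def[symmetric] using assms
    by (simp add: field_simps)
qed

lemma prob_le1: "prob_measure p f \<Longrightarrow> x \<in> Fp p \<Longrightarrow> f x \<le> 1"
proof -
  assume a: "prob_measure p f" "x \<in> Fp p"
  have "f x \<le> sum f (Fp p)"
    by (rule member_le_sum[OF a(2)]) (use a(1) in \<open>auto simp: prob_measure_def\<close>)
  then show ?thesis using a(1) by (simp add: prob_measure_def)
qed

lemma lam_lemma:
  fixes c K :: real and lam E :: "int \<Rightarrow> real"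
  assumes c: "0 < c" "c < 1" and K: "0 \<le> K" and p: "prime p" and lam: "prob_measure p lam"
    and D: "D \<subseteq> Fp p" "D \<noteq> {}" and hyp: "hypB c K p D E" and E0: "\<And>b. 0 \<le> E b"
  shows "(\<Sum>b\<in>Fp_star p. lam b * sqrt (E b)) \<le> 2 * sqrt K * (2 + CG c) * real (card D) powr (3/2)
      * ((min (real_of_int p / real (card D)) (real (card D))) powr (- c / 2)
         + (\<Sum>x\<in>Fp p. (lam x)\<^sup>2) powr (c / 2))"
proof -
  define Q where "Q = min (real_of_int p / real (card D)) (real (card D))"
  define L where "L = (\<Sum>x\<in>Fp p. (lam x)\<^sup>2)"
  define d where "d = real (card D)"
  define \<gamma> where "\<gamma> = 1 - c / 2"
  define A where "A = 2 * sqrt K * d powr (3/2)"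
  have A0: "0 \<le> A" unfolding A_def using K by simp
  have l0: "\<And>x. x \<in> Fp p \<Longrightarrow> 0 \<le> lam x" using lam unfolding prob_measure_def by auto
  have l1: "\<And>x. x \<in> Fp p \<Longrightarrow> lam x \<le> 1" using prob_le1[OF lam] .
  have lsum: "(\<Sum>x\<in>Fp p. lam x) = 1" using lam unfolding prob_measure_def by auto
  have Fs: "Fp_star p \<subseteq> Fp p" by (rule Fp_star_sub)
  define P where "P = {b\<in>Fp_star p. 0 < lam b}"
  have finP: "finite P" unfolding P_def by simp
  have PF: "P \<subseteq> Fp p" unfolding P_def using Fs by auto
  define lev where "lev b = nat \<lfloor>log 2 (1 / lam b)\<rfloor>" for b
  have levb: "lam b \<le> 1 / 2 ^ lev b" "1 / 2 ^ (lev b + 1) < lam b" if "b \<in> P" for b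
    using lev_bounds[of "lam b"] that l1 PF unfolding P_def lev_def by auto
  define TT where "TT = lev ` P"
  define Bk where "Bk k = {b \<in> P. lev b = k}" for k
  define s where "s k = real (card (Bk k))" for k
  have finTT: "finite TT" unfolding TT_def using finP by simp
  have finBk: "finite (Bk k)" for k unfolding Bk_def using finP by simp
  have BkP: "Bk k \<subseteq> P" for k unfolding Bk_def by auto
  have Bkne: "Bk k \<noteq> {}" if "k \<in> TT" for k using that unfolding TT_def Bk_def by auto
  have BkF: "Bk k \<subseteq> Fp_star p" for k using BkP unfolding P_def by auto
  have s1: "1 \<le> s k" if "k \<in> TT" for k
    unfolding s_def using Bkne[OF that] finBk[of k] by (simp add: Suc_le_eq card_gt_0_iff)
  have group: "(\<Sum>b\<in>P. g b) = (\<Sum>k\<in>TT. \<Sum>b\<in>Bk k. g b)" for g :: "int \<Rightarrow> real"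
    unfolding TT_def Bk_def by (rule sum.group[symmetric]) (use finP in auto)
  have Lpos: "0 < L"
  proof -
    obtain x where x: "x \<in> Fp p" "lam x \<noteq> 0" using lsum by (metis sum.neutral zero_neq_one)
    have "0 < (\<Sum>x\<in>Fp p. (lam x)\<^sup>2)" by (rule sum_pos2[OF Fp_finite x(1)]) (use x in auto)
    then show ?thesis unfolding L_def .
  qed
  have L1: "L \<le> 1"
  proof -
    have "L \<le> (\<Sum>x\<in>Fp p. lam x)" unfolding L_def
    proof (rule sum_mono)
      fix x assume "x \<in> Fp p"
      then show "(lam x)\<^sup>2 \<le> lam x" using l0 l1 by (simp add: power2_eq_square mult_left_le)
    qed
    then show ?thesis using lsum by simp
  qed
  have "(\<Sum>b\<in>Fp_star p. lam b * sqrt (E b)) = (\<Sum>b\<in>P. lam b * sqrt (E b))"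
  proof (rule sum.mono_neutral_right)
    show "finite (Fp_star p)" by simp
    show "P \<subseteq> Fp_star p" unfolding P_def by auto
    show "\<forall>i\<in>Fp_star p - P. lam i * sqrt (E i) = 0"
      using l0 Fs unfolding P_def by (auto simp: order.order_iff_strict)
  qed
  also have "\<dots> = (\<Sum>k\<in>TT. \<Sum>b\<in>Bk k. lam b * sqrt (E b))" by (rule group)
  also have "\<dots> \<le> (\<Sum>k\<in>TT. A * (Q powr (- c / 2) * (s k / 2 ^ k) + s k powr \<gamma> / 2 ^ k))"
  proof (rule sum_mono)
    fix k assume k: "k \<in> TT"
    have "(\<Sum>b\<in>Bk k. lam b * sqrt (E b)) \<le> (\<Sum>b\<in>Bk k. (1 / 2 ^ k) * sqrt (E b))"
    proof (rule sum_mono)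
      fix b assume b: "b \<in> Bk k"
      then have "lam b \<le> 1 / 2 ^ k" using levb(1)[of b] BkP unfolding Bk_def by auto
      then show "lam b * sqrt (E b) \<le> 1 / 2 ^ k * sqrt (E b)" by (rule mult_right_mono) (simp add: E0)
    qed
    also have "\<dots> = (1 / 2 ^ k) * (\<Sum>b\<in>Bk k. sqrt (E b))" by (simp add: sum_distrib_left)
    also have "\<dots> \<le> (1 / 2 ^ k) * (A * s k * (Q powr (- c / 2) + s k powr (- c / 2)))"
      using set_bound[OF hyp K E0 c(1) p D BkF Bkne[OF k]] unfolding A_def s_def Q_def d_def
      by (intro mult_left_mono) auto
    also have "\<dots> = A * (Q powr (- c / 2) * (s k / 2 ^ k) + (s k * s k powr (- c / 2)) / 2 ^ k)"
      by (simp add: field_simps)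
    also have "s k * s k powr (- c / 2) = s k powr \<gamma>"
    proof -
      have "s k powr \<gamma> = s k powr 1 * s k powr (- c / 2)"
        unfolding \<gamma>_def by (subst powr_add[symmetric]) simp
      moreover have "0 \<le> s k" using s1[OF k] by simp
      ultimately show ?thesis by (simp add: abs_of_nonneg)
    qed
    finally show "(\<Sum>b\<in>Bk k. lam b * sqrt (E b)) \<le> A * (Q powr (- c / 2) * (s k / 2 ^ k) + s k powr \<gamma> / 2 ^ k)" .
  qed
  also have "\<dots> = A * (\<Sum>k\<in>TT. Q powr (- c / 2) * (s k / 2 ^ k) + s k powr \<gamma> / 2 ^ k)"
    by (rule sum_distrib_left[symmetric])
  also have "\<dots> = A * ((\<Sum>k\<in>TT. Q powr (- c / 2) * (s k / 2 ^ k)) + (\<Sum>k\<in>TT. s k powr \<gamma> / 2 ^ k))"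
    by (simp only: sum.distrib)
  also have "\<dots> = A * (Q powr (- c / 2) * (\<Sum>k\<in>TT. s k / 2 ^ k) + (\<Sum>k\<in>TT. s k powr \<gamma> / 2 ^ k))"
    by (simp only: sum_distrib_left)
  also have "\<dots> \<le> A * (Q powr (- c / 2) * 2 + CG c * L powr (c / 2))"
  proof -
    have a: "(\<Sum>k\<in>TT. s k / 2 ^ k) \<le> 2"
    proof -
      have "(\<Sum>k\<in>TT. s k / 2 ^ k) \<le> (\<Sum>k\<in>TT. \<Sum>b\<in>Bk k. 2 * lam b)"
      proof (rule sum_mono)
        fix k assume k: "k \<in> TT"
        have "s k / 2 ^ k = (\<Sum>b\<in>Bk k. 1 / 2 ^ k)" unfolding s_def by simp
        also have "\<dots> \<le> (\<Sum>b\<in>Bk k. 2 * lam b)"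
        proof (rule sum_mono)
          fix b assume b: "b \<in> Bk k"
          then have "1 / 2 ^ (k + 1) < lam b" using levb(2)[of b] BkP unfolding Bk_def by auto
          then show "1 / 2 ^ k \<le> 2 * lam b" by (simp add: field_simps)
        qed
        finally show "s k / 2 ^ k \<le> (\<Sum>b\<in>Bk k. 2 * lam b)" .
      qed
      also have "\<dots> = (\<Sum>b\<in>P. 2 * lam b)" by (rule group[symmetric])
      also have "\<dots> \<le> (\<Sum>b\<in>Fp p. 2 * lam b)"
        by (rule sum_mono2) (use PF l0 in auto)
      also have "\<dots> = 2" using lsum by (simp add: sum_distrib_left[symmetric])
      finally show ?thesis .
    qed
    have b: "(\<Sum>k\<in>TT. s k powr \<gamma> / 2 ^ k) \<le> CG c * L powr (c / 2)"
      unfolding \<gamma>_def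
    proof (rule level_sum[OF c Lpos L1 finTT])
      fix k assume k: "k \<in> TT"
      have sl: "s k / 2 ^ (k + 1) \<le> (\<Sum>b\<in>Bk k. lam b)" "s k / 4 ^ (k + 1) \<le> (\<Sum>b\<in>Bk k. (lam b)\<^sup>2)"
      proof -
        have "s k / 2 ^ (k + 1) = (\<Sum>b\<in>Bk k. 1 / 2 ^ (k + 1))" unfolding s_def by simp
        also have "\<dots> \<le> (\<Sum>b\<in>Bk k. lam b)"
          by (rule sum_mono) (use levb(2) BkP Bk_def in \<open>auto intro: less_imp_le\<close>)
        finally show "s k / 2 ^ (k + 1) \<le> (\<Sum>b\<in>Bk k. lam b)" .
        have "s k / 4 ^ (k + 1) = (\<Sum>b\<in>Bk k. (1 / 2 ^ (k + 1))\<^sup>2)"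
          unfolding s_def by (simp add: power2_eq_square power_mult_distrib[symmetric])
        also have "\<dots> \<le> (\<Sum>b\<in>Bk k. (lam b)\<^sup>2)"
        proof (rule sum_mono)
          fix b assume b: "b \<in> Bk k"
          then have "1 / 2 ^ (k + 1) < lam b" using levb(2)[of b] BkP unfolding Bk_def by auto
          then show "(1 / 2 ^ (k + 1))\<^sup>2 \<le> (lam b)\<^sup>2"
            by (intro power_mono) auto
        qed
        finally show "s k / 4 ^ (k + 1) \<le> (\<Sum>b\<in>Bk k. (lam b)\<^sup>2)" .
      qed
      have "(\<Sum>b\<in>Bk k. lam b) \<le> (\<Sum>b\<in>Fp p. lam b)"
        by (rule sum_mono2) (use BkP PF l0 in auto)
      then have "s k / 2 ^ (k + 1) \<le> 1" using sl(1) lsum by linarith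
      then have u: "s k \<le> 2 ^ (k + 1)" by (simp add: pos_divide_le_eq)
      have "(\<Sum>b\<in>Bk k. (lam b)\<^sup>2) \<le> L"
        unfolding L_def by (rule sum_mono2) (use BkP PF in auto)
      then have "s k / 4 ^ (k + 1) \<le> L" using sl(2) by linarith
      then have v: "s k \<le> 4 ^ (k + 1) * L" by (simp add: pos_divide_le_eq mult.commute)
      show "0 \<le> s k \<and> s k \<le> 2 ^ (k + 1) \<and> s k \<le> 4 ^ (k + 1) * L"
        using u v unfolding s_def by simp
    qed
    have Q0: "0 \<le> Q powr (- c / 2)" by simp
    show ?thesis using a b A0 Q0 by (intro mult_left_mono add_mono) (auto intro: mult_left_mono)
  qed
  also have "\<dots> \<le> A * ((2 + CG c) * (Q powr (- c / 2) + L powr (c / 2)))"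
  proof -
    have "Q powr (- c / 2) * 2 + CG c * L powr (c / 2) \<le> (2 + CG c) * (Q powr (- c / 2) + L powr (c / 2))"
      using CG_pos[OF c] by (simp add: algebra_simps)
    then show ?thesis using A0 by (rule mult_left_mono)
  qed
  finally show ?thesis unfolding A_def Q_def L_def d_def by (simp only: mult_ac)
qed



lemma energy_lower:
  assumes p: "prime (p::int)" and A: "A \<subseteq> Fp p" and C: "C \<subseteq> Fp p"
  shows "(real (card A) * real (card C))\<^sup>2
     \<le> real (add_energy p A C) * real (card ((\<lambda>(a, c). (a + c) mod p) ` (A \<times> C)))"
proof -
  define g where "g = (\<lambda>(a::int, c::int). (a + c) mod p)"
  define S where "S = g ` (A \<times> C)"
  define R where "R s = {x \<in> A \<times> C. g x = s}" for s
  have fA: "finite A" using A finite_subset Fp_finite by blast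
  have fC: "finite C" using C finite_subset Fp_finite by blast
  have fAC: "finite (A \<times> C)" using fA fC by simp
  have fS: "finite S" unfolding S_def using fAC by simp
  have fR: "finite (R s)" for s unfolding R_def using fAC by simp
  have cnt: "(\<Sum>s\<in>S. real (card (R s))) = real (card A) * real (card C)"
  proof -
    have "(\<Sum>s\<in>S. (\<Sum>x\<in>R s. (1::real))) = (\<Sum>x\<in>A \<times> C. 1)"
      unfolding R_def S_def by (rule sum.group) (use fAC in auto)
    then show ?thesis by (simp add: card_cartesian_product)
  qed
  define E where "E = {(a1, b1, a2, b2). a1 \<in> A \<and> b1 \<in> C \<and> a2 \<in> A \<and> b2 \<in> C \<and>
      (a1 + b1) mod p = (a2 + b2) mod p}"
  have fE: "finite E" unfolding E_def by (rule energy_finite[OF fA fC])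
  define \<psi> where "\<psi> = (\<lambda>(s::int, ((a1::int, c1::int), (a2::int, c2::int))). (a1, c1, a2, c2))"
  have inj: "inj_on \<psi> (Sigma S (\<lambda>s. R s \<times> R s))"
  proof (rule inj_onI)
    fix u v assume u: "u \<in> Sigma S (\<lambda>s. R s \<times> R s)" and v: "v \<in> Sigma S (\<lambda>s. R s \<times> R s)"
      and e: "\<psi> u = \<psi> v"
    obtain s a1 c1 a2 c2 where ux: "u = (s, (a1, c1), (a2, c2))" "(a1, c1) \<in> R s"
      using u by auto
    obtain s' a1' c1' a2' c2' where vx: "v = (s', (a1', c1'), (a2', c2'))" "(a1', c1') \<in> R s'"
      using v by auto
    have e2: "(a1, c1, a2, c2) = (a1', c1', a2', c2')" using e ux vx unfolding \<psi>_def by simp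
    have "s = g (a1, c1)" "s' = g (a1', c1')" using ux(2) vx(2) unfolding R_def by auto
    then show "u = v" using e2 ux vx by simp
  qed
  have img: "\<psi> ` (Sigma S (\<lambda>s. R s \<times> R s)) \<subseteq> E"
  proof
    fix w assume "w \<in> \<psi> ` (Sigma S (\<lambda>s. R s \<times> R s))"
    then obtain s a1 c1 a2 c2 where x: "(a1, c1) \<in> R s" "(a2, c2) \<in> R s"
      and w: "w = \<psi> (s, (a1, c1), (a2, c2))" by force
    have "a1 \<in> A" "c1 \<in> C" "a2 \<in> A" "c2 \<in> C" "(a1 + c1) mod p = (a2 + c2) mod p"
      using x unfolding R_def g_def by auto
    then show "w \<in> E" unfolding w \<psi>_def E_def by simp
  qed
  have "(\<Sum>s\<in>S. (real (card (R s)))\<^sup>2) = real (\<Sum>s\<in>S. card (R s \<times> R s))"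
    by (simp add: card_cartesian_product power2_eq_square)
  also have "\<dots> = real (card (Sigma S (\<lambda>s. R s \<times> R s)))"
    by (subst card_SigmaI) (auto simp: fS fR)
  also have "\<dots> \<le> real (card E)" using card_inj_on_le[OF inj img fE] by simp
  finally have sq: "(\<Sum>s\<in>S. (real (card (R s)))\<^sup>2) \<le> real (add_energy p A C)"
    unfolding E_def add_energy_def .
  have "(\<Sum>s\<in>S. 1 * real (card (R s)))\<^sup>2 \<le> (\<Sum>s\<in>S. 1\<^sup>2) * (\<Sum>s\<in>S. (real (card (R s)))\<^sup>2)"
    by (rule Cauchy_Schwarz_ineq_sum)
  then have "(real (card A) * real (card C))\<^sup>2 \<le> real (card S) * (\<Sum>s\<in>S. (real (card (R s)))\<^sup>2)"
    using cnt by simp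
  also have "\<dots> \<le> real (card S) * real (add_energy p A C)" using sq by (simp add: mult_left_mono)
  finally show ?thesis unfolding S_def g_def by (simp add: mult.commute)
qed

lemma interval_energy:
  assumes p: "prime (p::int)" and k: "1 \<le> k" "int k < p" and b: "1 \<le> b" "b \<le> int k"
  shows "real k ^ 3 / real_of_int (b + 1) \<le> real (add_energy p {0..<int k} (dilset p b {0..<int k}))"
proof -
  define A where "A = {0..<int k}"
  have A: "A \<subseteq> Fp p" unfolding A_def Fp_def using k by auto
  have bF: "b \<in> Fp_star p" unfolding Fp_star_def Fp_def using b k by auto
  have cA: "card A = k" unfolding A_def by simp
  have cC: "card (dilset p b A) = k" using card_dilset[OF p bF A] cA by simp
  define S where "S = (\<lambda>(a, c). (a + c) mod p) ` (A \<times> dilset p b A)"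
  have Ssub: "S \<subseteq> (\<lambda>n. n mod p) ` {0..<int k * (b + 1)}"
  proof
    fix s assume "s \<in> S"
    then obtain a a' where a: "a \<in> A" "a' \<in> A" and s: "s = (a + (b * a') mod p) mod p"
      unfolding S_def dilset_def by auto
    have s2: "s = (a + b * a') mod p" using s by (simp add: mod_add_right_eq)
    have r: "0 \<le> a" "a \<le> int k - 1" "0 \<le> a'" "a' \<le> int k - 1" using a unfolding A_def by auto
    have "b * a' \<le> b * (int k - 1)" using r b by (intro mult_left_mono) auto
    then have "a + b * a' \<le> (int k - 1) + b * (int k - 1)" using r by linarith
    also have "\<dots> < int k * (b + 1)" using b by (simp add: algebra_simps)
    finally have "a + b * a' < int k * (b + 1)" .
    moreover have "0 \<le> a + b * a'" using r b by simp
    ultimately show "s \<in> (\<lambda>n. n mod p) ` {0..<int k * (b + 1)}" using s2 by auto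
  qed
  have "card S \<le> card {0..<int k * (b + 1)}"
    using card_image_le[OF finite_atLeastLessThan_int, of "\<lambda>n. n mod p" 0 "int k * (b + 1)"]
      card_mono[OF finite_imageI[OF finite_atLeastLessThan_int] Ssub] by linarith
  then have "int (card S) \<le> int k * (b + 1)" using b by (simp add: le_nat_iff)
  then have "real_of_int (int (card S)) \<le> real_of_int (int k * (b + 1))" by (simp only: of_int_le_iff)
  then have cS: "real (card S) \<le> real_of_int (int k * (b + 1))" by simp
  have "(real k * real k)\<^sup>2 \<le> real (add_energy p A (dilset p b A)) * real (card S)"
    using energy_lower[OF p A dilset_sub[OF p, of b A]] cA cC unfolding S_def by simp
  also have "\<dots> \<le> real (add_energy p A (dilset p b A)) * (real k * real_of_int (b + 1))"
    using cS by (intro mult_left_mono) auto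
  finally have "(real k * real k)\<^sup>2 \<le> real (add_energy p A (dilset p b A)) * (real k * real_of_int (b + 1))" .
  then have h: "real k * (real k ^ 3) \<le> real k * (real (add_energy p A (dilset p b A)) * real_of_int (b + 1))"
    by (simp add: power2_eq_square power3_eq_cube algebra_simps)
  have k0: "0 < real k" using k by simp
  have "real k ^ 3 \<le> real (add_energy p A (dilset p b A)) * real_of_int (b + 1)"
    using h k0 by (simp only: mult_le_cancel_left_pos)
  moreover have "0 < real_of_int (b + 1)" using b by simp
  ultimately show ?thesis unfolding A_def[symmetric] by (simp add: pos_divide_le_eq)
qed



lemma bourgain_K:
  assumes "bourgain_energy c"
  shows "\<exists>K\<ge>0. \<forall>p A B. prime p \<and> A \<subseteq> Fp p \<and> B \<subseteq> Fp_star p \<and> B \<noteq> {} \<and> card B \<le> card A \<longrightarrow>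
      (\<Sum>b\<in>B. real (add_energy p A (dilset p b A)))
        \<le> K * (min (real_of_int p / real (card A)) (real (card B))) powr (- c)
            * real (card A) ^ 3 * real (card B)"
proof -
  obtain K where K: "\<forall>p A B. prime p \<and> A \<subseteq> Fp p \<and> B \<subseteq> Fp_star p \<and>
      B \<noteq> {} \<and> card B \<le> card A \<longrightarrow>
      real (\<Sum>b\<in>B. add_energy p A (dilset p b A))
        \<le> K * (min (real_of_int p / real (card A)) (real (card B))) powr (- c)
            * real (card A) ^ 3 * real (card B)"
    using assms unfolding bourgain_energy_def by blast
  show ?thesis
  proof (intro exI[of _ "max K 0"] conjI allI impI)
    show "0 \<le> max K 0" by simp
    fix p A B
    assume h: "prime p \<and> A \<subseteq> Fp p \<and> B \<subseteq> Fp_star p \<and> B \<noteq> {} \<and> card B \<le> card A"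
    have "(\<Sum>b\<in>B. real (add_energy p A (dilset p b A))) = real (\<Sum>b\<in>B. add_energy p A (dilset p b A))"
      by simp
    also have "\<dots> \<le> K * (min (real_of_int p / real (card A)) (real (card B))) powr (- c)
            * real (card A) ^ 3 * real (card B)" using K h by blast
    also have "\<dots> \<le> max K 0 * (min (real_of_int p / real (card A)) (real (card B))) powr (- c)
            * real (card A) ^ 3 * real (card B)"
      by (intro mult_right_mono) auto
    finally show "(\<Sum>b\<in>B. real (add_energy p A (dilset p b A)))
        \<le> max K 0 * (min (real_of_int p / real (card A)) (real (card B))) powr (- c)
            * real (card A) ^ 3 * real (card B)" .
  qed
qed

lemma harm_shift: "(\<Sum>j\<in>{1..k}. 1 / (real j + 1)) = harm (k + 1) - 1"
proof (induction k)
  case 0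
  then show ?case by (simp add: harm_def)
next
  case (Suc k)
  have "(\<Sum>j\<in>{1..Suc k}. 1 / (real j + 1)) = (\<Sum>j\<in>{1..k}. 1 / (real j + 1)) + 1 / (real (Suc k) + 1)"
    by simp
  also have "\<dots> = (harm (k + 1) - 1) + 1 / (real (Suc k) + 1)" by (simp only: Suc.IH)
  also have "\<dots> = harm (Suc k + 1) - 1" by (simp add: harm_Suc inverse_eq_divide)
  finally show ?case .
qed

lemma int_img: "int ` {1..k} = {1..int k}"
proof
  show "int ` {1..k} \<subseteq> {1..int k}" by auto
  show "{1..int k} \<subseteq> int ` {1..k}"
  proof
    fix x assume x: "x \<in> {1..int k}"
    then have "x = int (nat x)" "nat x \<in> {1..k}" by auto
    then show "x \<in> int ` {1..k}" by blast
  qed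
qed

lemma c_lt_1:
  assumes "bourgain_energy c"
  shows "c < 1"
proof (rule ccontr)
  assume "\<not> c < 1"
  then have c1: "1 \<le> c" by simp
  obtain K where K0: "0 \<le> K" and K: "\<forall>p A B. prime p \<and> A \<subseteq> Fp p \<and> B \<subseteq> Fp_star p \<and> B \<noteq> {} \<and> card B \<le> card A \<longrightarrow>
      (\<Sum>b\<in>B. real (add_energy p A (dilset p b A)))
        \<le> K * (min (real_of_int p / real (card A)) (real (card B))) powr (- c)
            * real (card A) ^ 3 * real (card B)"
    using bourgain_K[OF assms] by blast
  define k where "k = nat \<lceil>exp (K + 1)\<rceil> + 1"
  have k1: "1 \<le> k" unfolding k_def by simp
  have kexp: "exp (K + 1) < real k + 1" unfolding k_def by linarith
  have harm_big: "K + 1 < harm (k + 1)"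
  proof -
    have "K + 1 = ln (exp (K + 1))" by simp
    also have "\<dots> < ln (real k + 1 + 1)"
      using kexp by (subst ln_less_cancel_iff) auto
    also have "\<dots> \<le> harm (k + 1)" using harm_ge_ln[of "k + 1"] by (simp add: add.commute)
    finally show ?thesis .
  qed
  obtain q :: nat where q: "prime q" "k * k + k < q" using bigger_prime by blast
  define p where "p = int q"
  have p: "prime p" unfolding p_def using q by simp
  have kq: "k * k \<le> q" "k < q" using q(2) by auto
  have "int (k * k) \<le> int q" using kq(1) by (simp only: of_nat_le_iff)
  then have pk2: "int k * int k \<le> p" unfolding p_def by simp
  have pk: "int k < p" "int k * int k \<le> p" unfolding p_def using kq(2) pk2 p_def by auto
  define A where "A = {0..<int k}"
  define B where "B = {1..int k}"
  have A: "A \<subseteq> Fp p" unfolding A_def Fp_def using pk by auto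
  have B: "B \<subseteq> Fp_star p" unfolding B_def Fp_star_def Fp_def using pk by auto
  have cA: "card A = k" unfolding A_def by simp
  have cB: "card B = k" unfolding B_def by simp
  have Bne: "B \<noteq> {}" unfolding B_def using k1 by simp
  have up: "(\<Sum>b\<in>B. real (add_energy p A (dilset p b A)))
        \<le> K * (min (real_of_int p / real k) (real k)) powr (- c) * real k ^ 3 * real k"
  proof -
    have "prime p \<and> A \<subseteq> Fp p \<and> B \<subseteq> Fp_star p \<and> B \<noteq> {} \<and> card B \<le> card A"
      using p A B Bne cA cB by simp
    then have "(\<Sum>b\<in>B. real (add_energy p A (dilset p b A)))
        \<le> K * (min (real_of_int p / real (card A)) (real (card B))) powr (- c)
            * real (card A) ^ 3 * real (card B)" using K by blast
    then show ?thesis unfolding cA cB .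
  qed
  have mn: "min (real_of_int p / real k) (real k) = real k"
  proof -
    have "real k * real k \<le> real_of_int p" using pk(2) by (metis of_int_le_iff of_int_mult of_int_of_nat_eq)
    then have "real k \<le> real_of_int p / real k" using k1 by (simp add: pos_le_divide_eq)
    then show ?thesis by simp
  qed
  have kp: "real k powr (- c) * real k \<le> 1"
  proof -
    have "real k powr (- c) \<le> real k powr (- 1)" using c1 k1 by (intro powr_mono) auto
    also have "\<dots> = 1 / real k" using k1 by (simp add: powr_minus_divide)
    finally show ?thesis using k1 by (simp add: pos_le_divide_eq mult.commute)
  qed
  have "K * (real k powr (- c)) * real k ^ 3 * real k = K * real k ^ 3 * (real k powr (- c) * real k)"
    by (simp add: algebra_simps)
  also have "\<dots> \<le> K * real k ^ 3 * 1" using kp K0 by (intro mult_left_mono) auto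
  finally have up2: "(\<Sum>b\<in>B. real (add_energy p A (dilset p b A))) \<le> K * real k ^ 3"
    using up mn by simp
  have low: "(\<Sum>b\<in>B. real k ^ 3 / real_of_int (b + 1)) \<le> (\<Sum>b\<in>B. real (add_energy p A (dilset p b A)))"
  proof (rule sum_mono)
    fix b assume "b \<in> B"
    then have "1 \<le> b" "b \<le> int k" unfolding B_def by auto
    then show "real k ^ 3 / real_of_int (b + 1) \<le> real (add_energy p A (dilset p b A))"
      using interval_energy[OF p k1 pk(1)] unfolding A_def by blast
  qed
  have "(\<Sum>b\<in>B. real k ^ 3 / real_of_int (b + 1)) = (\<Sum>j\<in>{1..k}. real k ^ 3 / real_of_int (int j + 1))"
    unfolding B_def int_img[symmetric] by (simp add: sum.reindex inj_on_def)
  also have "\<dots> = real k ^ 3 * (\<Sum>j\<in>{1..k}. 1 / (real j + 1))"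
    by (simp add: sum_distrib_left)
  also have "\<dots> = real k ^ 3 * (harm (k + 1) - 1)" by (simp only: harm_shift)
  finally have "real k ^ 3 * (harm (k + 1) - 1) \<le> K * real k ^ 3" using low up2 by linarith
  then have "harm (k + 1) - 1 \<le> K" using k1 by (simp add: mult.commute)
  then show False using harm_big by linarith
qed



lemma norm2_tri3: "norm2 p (\<lambda>x. f x + g x) \<le> A \<Longrightarrow> norm2 p f \<le> B \<Longrightarrow> norm2 p g \<le> A' \<Longrightarrow>
   A = A \<Longrightarrow> norm2 p (\<lambda>x. f x + g x) \<le> B + A'"
  using norm2_triangle[of p f g] by linarith

lemma prob_nonneg: "prob_measure p f \<Longrightarrow> x \<in> Fp p \<Longrightarrow> 0 \<le> f x"
  unfolding prob_measure_def by auto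

lemma prob_sum: "prob_measure p f \<Longrightarrow> (\<Sum>x\<in>Fp p. f x) = 1"
  unfolding prob_measure_def by auto

lemma dil_nonneg:
  assumes p: "prime p" and b: "b \<in> Fp_star p" and f: "\<And>x. x \<in> Fp p \<Longrightarrow> 0 \<le> f x"
  shows "\<And>x. x \<in> Fp p \<Longrightarrow> 0 \<le> dil p b f x"
  unfolding dil_def using f fdiv_char(1)[OF p b] by blast

lemma decomp:
  fixes mu :: "int \<Rightarrow> real"
  assumes p: "prime p" and mu: "prob_measure p mu" and b: "b \<in> Fp_star p"
    and a: "0 \<le> a" and h: "0 < h" and ah: "a \<le> h"
  defines "ml \<equiv> \<lambda>x. if mu x \<le> a then mu x else 0"
    and "mh \<equiv> \<lambda>x. if h < mu x then mu x else 0"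
    and "mm \<equiv> \<lambda>x. if a < mu x \<and> mu x \<le> h then mu x else 0"
  shows "norm2 p (conv p mu (dil p b mu)) \<le> norm2 p (conv p mm (dil p b mm))
           + 2 * sqrt a + 2 * ((\<Sum>x\<in>Fp p. (mu x)\<^sup>2) / h) * norm2 p mu"
proof -
  define nu where "nu = (\<lambda>x. ml x + mh x)"
  have m0: "\<And>x. x \<in> Fp p \<Longrightarrow> 0 \<le> mu x" using prob_nonneg[OF mu] .
  have ml0: "\<And>x. x \<in> Fp p \<Longrightarrow> 0 \<le> ml x" unfolding ml_def using m0 by auto
  have mh0: "\<And>x. x \<in> Fp p \<Longrightarrow> 0 \<le> mh x" unfolding mh_def using m0 by auto
  have mm0: "\<And>x. x \<in> Fp p \<Longrightarrow> 0 \<le> mm x" unfolding mm_def using m0 by auto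
  have eq: "mu = (\<lambda>x. mm x + nu x)"
    unfolding mm_def nu_def ml_def mh_def using ah by (auto intro!: ext)
  have eqnu: "nu = (\<lambda>x. ml x + mh x)" unfolding nu_def ..
  have decomp: "conv p mu (dil p b mu) = (\<lambda>x. conv p mm (dil p b mm) x +
      ((conv p mm (dil p b ml) x + conv p mm (dil p b mh) x) +
       (conv p ml (dil p b mu) x + conv p mh (dil p b mu) x)))"
  proof (rule ext)
    fix x
    have "conv p mu (dil p b mu) x = conv p (\<lambda>x. mm x + nu x) (dil p b mu) x"
      by (subst eq) (rule refl)
    also have "\<dots> = conv p mm (dil p b mu) x + conv p nu (dil p b mu) x" by (rule conv_add_left)
    also have "conv p mm (dil p b mu) x = conv p mm (dil p b (\<lambda>x. mm x + nu x)) x"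
      by (subst eq) (rule refl)
    also have "\<dots> = conv p mm (dil p b mm) x + conv p mm (dil p b nu) x"
      unfolding dil_add by (rule conv_add_right)
    also have "conv p mm (dil p b nu) x = conv p mm (dil p b ml) x + conv p mm (dil p b mh) x"
      unfolding eqnu dil_add by (rule conv_add_right)
    also have "conv p nu (dil p b mu) x = conv p ml (dil p b mu) x + conv p mh (dil p b mu) x"
      unfolding eqnu by (rule conv_add_left)
    finally show "conv p mu (dil p b mu) x = conv p mm (dil p b mm) x +
      ((conv p mm (dil p b ml) x + conv p mm (dil p b mh) x) +
       (conv p ml (dil p b mu) x + conv p mh (dil p b mu) x))" by simp
  qed
  have smu: "(\<Sum>x\<in>Fp p. mu x) = 1" using prob_sum[OF mu] .
  have smm: "(\<Sum>x\<in>Fp p. mm x) \<le> 1"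
  proof -
    have "(\<Sum>x\<in>Fp p. mm x) \<le> (\<Sum>x\<in>Fp p. mu x)" by (rule sum_mono) (use m0 in \<open>auto simp: mm_def\<close>)
    then show ?thesis using smu by simp
  qed
  have smh: "(\<Sum>x\<in>Fp p. mh x) \<le> (\<Sum>x\<in>Fp p. (mu x)\<^sup>2) / h"
  proof -
    have "(\<Sum>x\<in>Fp p. mh x) \<le> (\<Sum>x\<in>Fp p. (mu x)\<^sup>2 / h)"
    proof (rule sum_mono)
      fix x assume x: "x \<in> Fp p"
      show "mh x \<le> (mu x)\<^sup>2 / h"
      proof (cases "h < mu x")
        case True
        then have "mu x * h \<le> mu x * mu x" using m0[OF x] by (intro mult_left_mono) auto
        then show ?thesis using True h by (simp add: mh_def power2_eq_square pos_le_divide_eq)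
      next
        case False
        then show ?thesis using h by (simp add: mh_def)
      qed
    qed
    also have "\<dots> = (\<Sum>x\<in>Fp p. (mu x)\<^sup>2) / h" by (simp add: sum_divide_distrib)
    finally show ?thesis .
  qed
  have nml: "norm2 p ml \<le> sqrt a"
  proof -
    have "(\<Sum>x\<in>Fp p. \<bar>ml x\<bar>^2) \<le> (\<Sum>x\<in>Fp p. a * mu x)"
    proof (rule sum_mono)
      fix x assume x: "x \<in> Fp p"
      show "\<bar>ml x\<bar>^2 \<le> a * mu x"
      proof (cases "mu x \<le> a")
        case True
        then have "mu x * mu x \<le> a * mu x" using m0[OF x] by (intro mult_right_mono) auto
        then show ?thesis using True m0[OF x] by (simp add: ml_def power2_eq_square)
      next
        case False
        then show ?thesis using a m0[OF x] by (simp add: ml_def)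
      qed
    qed
    also have "\<dots> = a" using smu by (simp add: sum_distrib_left[symmetric])
    finally show ?thesis unfolding norm2_def by simp
  qed
  have nmm: "norm2 p mm \<le> norm2 p mu"
    by (rule norm2_mono) (use m0 in \<open>auto simp: mm_def\<close>)
  have nmu0: "0 \<le> norm2 p mu" by (rule norm2_nonneg)
  have dmu0: "\<And>x. x \<in> Fp p \<Longrightarrow> 0 \<le> dil p b mu x" by (rule dil_nonneg[OF p b m0])
  have dmh0: "\<And>x. x \<in> Fp p \<Longrightarrow> 0 \<le> dil p b mh x" by (rule dil_nonneg[OF p b mh0])
  have e1: "norm2 p (conv p mm (dil p b ml)) \<le> sqrt a"
  proof -
    have "norm2 p (conv p mm (dil p b ml)) \<le> (\<Sum>x\<in>Fp p. mm x) * norm2 p (dil p b ml)"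
      by (rule young1[OF p mm0])
    also have "\<dots> \<le> 1 * sqrt a"
      using smm nml norm2_dil[OF p b, of ml] norm2_nonneg[of p ml] sum_nonneg[of "Fp p" mm] mm0
      by (intro mult_mono) auto
    finally show ?thesis by simp
  qed
  have e2: "norm2 p (conv p mm (dil p b mh)) \<le> norm2 p mu * ((\<Sum>x\<in>Fp p. (mu x)\<^sup>2) / h)"
  proof -
    have "norm2 p (conv p mm (dil p b mh)) \<le> norm2 p mm * (\<Sum>x\<in>Fp p. dil p b mh x)"
      by (rule young2[OF p dmh0])
    also have "(\<Sum>x\<in>Fp p. dil p b mh x) = (\<Sum>x\<in>Fp p. mh x)" by (rule sum_dil1[OF p b])
    also have "norm2 p mm * (\<Sum>x\<in>Fp p. mh x) \<le> norm2 p mu * ((\<Sum>x\<in>Fp p. (mu x)\<^sup>2) / h)"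
      using nmm smh norm2_nonneg[of p mm] sum_nonneg[of "Fp p" mh] mh0 nmu0
      by (intro mult_mono) auto
    finally show ?thesis .
  qed
  have e3: "norm2 p (conv p ml (dil p b mu)) \<le> sqrt a"
  proof -
    have "norm2 p (conv p ml (dil p b mu)) \<le> norm2 p ml * (\<Sum>x\<in>Fp p. dil p b mu x)"
      by (rule young2[OF p dmu0])
    also have "(\<Sum>x\<in>Fp p. dil p b mu x) = 1" using sum_dil1[OF p b, of mu] smu by simp
    finally show ?thesis using nml by simp
  qed
  have e4: "norm2 p (conv p mh (dil p b mu)) \<le> ((\<Sum>x\<in>Fp p. (mu x)\<^sup>2) / h) * norm2 p mu"
  proof -
    have "norm2 p (conv p mh (dil p b mu)) \<le> (\<Sum>x\<in>Fp p. mh x) * norm2 p (dil p b mu)"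
      by (rule young1[OF p mh0])
    also have "norm2 p (dil p b mu) = norm2 p mu" by (rule norm2_dil[OF p b])
    also have "(\<Sum>x\<in>Fp p. mh x) * norm2 p mu \<le> ((\<Sum>x\<in>Fp p. (mu x)\<^sup>2) / h) * norm2 p mu"
      using smh nmu0 by (intro mult_right_mono) auto
    finally show ?thesis .
  qed
  have "norm2 p (conv p mu (dil p b mu)) \<le> norm2 p (conv p mm (dil p b mm)) +
      ((norm2 p (conv p mm (dil p b ml)) + norm2 p (conv p mm (dil p b mh))) +
       (norm2 p (conv p ml (dil p b mu)) + norm2 p (conv p mh (dil p b mu))))"
    unfolding decomp
    using norm2_triangle[of p "conv p mm (dil p b mm)" "\<lambda>x. (conv p mm (dil p b ml) x + conv p mm (dil p b mh) x) +
       (conv p ml (dil p b mu) x + conv p mh (dil p b mu) x)"]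
      norm2_triangle[of p "\<lambda>x. conv p mm (dil p b ml) x + conv p mm (dil p b mh) x"
         "\<lambda>x. conv p ml (dil p b mu) x + conv p mh (dil p b mu) x"]
      norm2_triangle[of p "conv p mm (dil p b ml)" "conv p mm (dil p b mh)"]
      norm2_triangle[of p "conv p ml (dil p b mu)" "conv p mh (dil p b mu)"]
    by linarith
  moreover have "norm2 p (conv p mm (dil p b mh)) \<le> ((\<Sum>x\<in>Fp p. (mu x)\<^sup>2) / h) * norm2 p mu"
    using e2 by (simp only: mult.commute)
  ultimately show ?thesis using e1 e3 e4 by linarith
qed



lemma norm2_pos_prob: "prime p \<Longrightarrow> prob_measure p f \<Longrightarrow> 0 < norm2 p f"
proof -
  assume p: "prime p" and f: "prob_measure p f"
  obtain x where x: "x \<in> Fp p" "f x \<noteq> 0" using prob_sum[OF f] by (metis sum.neutral zero_neq_one)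
  have "0 < (\<Sum>x\<in>Fp p. \<bar>f x\<bar> ^ 2)" by (rule sum_pos2[OF Fp_finite x(1)]) (use x in auto)
  then show ?thesis unfolding norm2_def by simp
qed

lemma sum_star_le1: "prob_measure p f \<Longrightarrow> (\<Sum>b\<in>Fp_star p. f b) \<le> 1"
proof -
  assume f: "prob_measure p f"
  have "(\<Sum>b\<in>Fp_star p. f b) \<le> (\<Sum>b\<in>Fp p. f b)"
    by (rule sum_mono2) (use Fp_star_sub prob_nonneg[OF f] in auto)
  then show ?thesis using prob_sum[OF f] by simp
qed

lemma sum_star_nonneg: "prob_measure p f \<Longrightarrow> 0 \<le> (\<Sum>b\<in>Fp_star p. f b)"
  by (rule sum_nonneg) (use Fp_star_sub prob_nonneg in blast)

lemma weighted_le: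
  assumes lam: "prob_measure p lam" and g: "\<And>b. b \<in> Fp_star p \<Longrightarrow> g b \<le> B" and B: "0 \<le> B"
  shows "(\<Sum>b\<in>Fp_star p. lam b * g b) \<le> B"
proof -
  have "(\<Sum>b\<in>Fp_star p. lam b * g b) \<le> (\<Sum>b\<in>Fp_star p. lam b * B)"
  proof (rule sum_mono)
    fix b assume b: "b \<in> Fp_star p"
    have "0 \<le> lam b" using prob_nonneg[OF lam] Fp_star_sub b by blast
    then show "lam b * g b \<le> lam b * B" using g[OF b] by (rule mult_left_mono[rotated])
  qed
  also have "\<dots> = (\<Sum>b\<in>Fp_star p. lam b) * B" by (simp add: sum_distrib_right)
  also have "\<dots> \<le> 1 * B" using sum_star_le1[OF lam] B by (intro mult_right_mono) auto
  finally show ?thesis by simp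
qed

lemma basic_bound:
  assumes p: "prime p" and lam: "prob_measure p lam" and mu: "prob_measure p mu"
  shows "(\<Sum>b\<in>Fp_star p. lam b * norm2 p (conv p mu (dil p b mu))) \<le> norm2 p mu"
proof (rule weighted_le[OF lam _ norm2_nonneg])
  fix b assume b: "b \<in> Fp_star p"
  have "norm2 p (conv p mu (dil p b mu)) \<le> (\<Sum>y\<in>Fp p. mu y) * norm2 p (dil p b mu)"
    by (rule young1[OF p prob_nonneg[OF mu]])
  then show "norm2 p (conv p mu (dil p b mu)) \<le> norm2 p mu"
    using prob_sum[OF mu] norm2_dil[OF p b] by simp
qed

lemma sq_powr: "0 < (x::real) \<Longrightarrow> (x ^ 2) powr e = x powr (2 * e)"
proof -
  assume x: "0 < x"
  have "x ^ 2 = x powr 2" using powr_realpow[OF x, of 2] by simp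
  then show ?thesis by (simp add: powr_powr)
qed

lemma pow_powr: "0 < (x::real) \<Longrightarrow> (x powr e) ^ n = x powr (e * real n)"
  by (simp add: powr_realpow[symmetric] powr_powr)



definition bK :: "real \<Rightarrow> real \<Rightarrow> bool" where
  "bK c K \<longleftrightarrow> (\<forall>p A B. prime p \<and> A \<subseteq> Fp p \<and> B \<subseteq> Fp_star p \<and> B \<noteq> {} \<and> card B \<le> card A \<longrightarrow>
      (\<Sum>b\<in>B. real (add_energy p A (dilset p b A)))
        \<le> K * (min (real_of_int p / real (card A)) (real (card B))) powr (- c)
            * real (card A) ^ 3 * real (card B))"

lemma mid_bound:
  fixes c K X \<delta> :: real and lam mu :: "int \<Rightarrow> real"
  assumes c: "0 < c" "c < 1" and K: "0 \<le> K" and bk: "bK c K"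
    and p: "prime p" and lam: "prob_measure p lam" and mu: "prob_measure p mu"
    and X: "X = norm2 p lam + norm2 p mu + 1 / (norm2 p mu * sqrt (real_of_int p))" and X1: "X < 1"
    and \<delta>: "\<delta> = X powr (c / 7)"
  defines "mm \<equiv> \<lambda>x. if \<delta>\<^sup>2 * (\<Sum>x\<in>Fp p. (mu x)\<^sup>2) < mu x \<and> mu x \<le> (\<Sum>x\<in>Fp p. (mu x)\<^sup>2) / \<delta> then mu x else 0"
  shows "(\<Sum>b\<in>Fp_star p. lam b * norm2 p (conv p mm (dil p b mm)))
           \<le> (1 + 2 * (2 * sqrt K * (2 + CG c))) * \<delta> * norm2 p mu"
proof -
  define n where "n = norm2 p mu"
  define nl where "nl = norm2 p lam"
  define M where "M = (\<Sum>x\<in>Fp p. (mu x)\<^sup>2)"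
  define C1 where "C1 = 2 * sqrt K * (2 + CG c)"
  have C10: "0 \<le> C1" unfolding C1_def using K CG_pos[OF c] by simp
  have n0: "0 < n" unfolding n_def by (rule norm2_pos_prob[OF p mu])
  have nl0: "0 \<le> nl" unfolding nl_def by (rule norm2_nonneg)
  have Mn: "M = n\<^sup>2" unfolding M_def n_def using norm2_sq[of p mu] by simp
  have pp: "0 < real_of_int p" using prime_gt_1_int[OF p] by simp
  have sp: "0 < sqrt (real_of_int p)" using pp by simp
  have third0: "0 < 1 / (n * sqrt (real_of_int p))" using n0 sp by simp
  have Xe: "X = nl + n + 1 / (n * sqrt (real_of_int p))" unfolding X nl_def n_def ..
  have X0: "0 < X" using Xe nl0 n0 third0 by linarith
  have nX: "n \<le> X" using Xe nl0 third0 by linarith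
  have nlX: "nl \<le> X" using Xe n0 third0 by linarith
  have tX: "1 / (n * sqrt (real_of_int p)) \<le> X" using Xe nl0 n0 by linarith
  have d0: "0 < \<delta>" unfolding \<delta> using X0 by simp
  have d1: "\<delta> < 1" unfolding \<delta> using powr_less_mono2[of "c/7" X 1] X0 X1 c by simp
  define a where "a = \<delta>\<^sup>2 * M"
  define h where "h = M / \<delta>"
  have M0: "0 < M" using Mn n0 by simp
  have a0: "0 < a" unfolding a_def using d0 M0 by simp
  have h0: "0 < h" unfolding h_def using d0 M0 by simp
  define D where "D = {x \<in> Fp p. a < mu x \<and> mu x \<le> h}"
  have DF: "D \<subseteq> Fp p" unfolding D_def by auto
  have fD: "finite D" using DF finite_subset Fp_finite by blast
  have mmD: "0 \<le> mm x \<and> mm x \<le> (if x \<in> D then h else 0)" if "x \<in> Fp p" for x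
    using prob_nonneg[OF mu that] that unfolding mm_def D_def a_def h_def M_def by auto
  have mm0: "\<And>x. x \<in> Fp p \<Longrightarrow> 0 \<le> mm x" using mmD by blast
  have da: "real (card D) * a \<le> 1"
  proof -
    have "real (card D) * a = (\<Sum>x\<in>D. a)" by simp
    also have "\<dots> \<le> (\<Sum>x\<in>D. mu x)" by (rule sum_mono) (simp add: D_def)
    also have "\<dots> \<le> (\<Sum>x\<in>Fp p. mu x)" by (rule sum_mono2) (use DF prob_nonneg[OF mu] in auto)
    finally show ?thesis using prob_sum[OF mu] by simp
  qed
  define N0 where "N0 = \<delta>\<^sup>2 / X\<^sup>2"
  have N00: "0 < N0" unfolding N0_def using d0 X0 by simp
  have MX: "M \<le> X\<^sup>2" unfolding Mn using nX n0 by (simp add: power_mono)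
  show ?thesis
  proof (cases "real (card D) \<le> N0")
    case True
    have "(\<Sum>b\<in>Fp_star p. lam b * norm2 p (conv p mm (dil p b mm))) \<le> \<delta> * n"
    proof (rule weighted_le[OF lam])
      show "0 \<le> \<delta> * n" using d0 n0 by simp
      fix b assume b: "b \<in> Fp_star p"
      have "norm2 p (conv p mm (dil p b mm)) \<le> (\<Sum>y\<in>Fp p. mm y) * norm2 p (dil p b mm)"
        by (rule young1[OF p mm0])
      also have "norm2 p (dil p b mm) = norm2 p mm" by (rule norm2_dil[OF p b])
      also have "norm2 p mm \<le> n" unfolding n_def
        by (rule norm2_mono) (use prob_nonneg[OF mu] in \<open>auto simp: mm_def\<close>)
      then have "(\<Sum>y\<in>Fp p. mm y) * norm2 p mm \<le> (\<Sum>y\<in>Fp p. mm y) * n"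
        using sum_nonneg[of "Fp p" mm] mm0 by (intro mult_left_mono) auto
      also have "(\<Sum>y\<in>Fp p. mm y) \<le> h * real (card D)"
      proof -
        have "(\<Sum>y\<in>Fp p. mm y) \<le> (\<Sum>y\<in>Fp p. if y \<in> D then h else 0)"
          by (rule sum_mono) (use mmD in blast)
        also have "\<dots> = (\<Sum>y\<in>{y\<in>Fp p. y \<in> D}. h)" by (rule sum.inter_filter[symmetric]) simp
        also have "{y\<in>Fp p. y \<in> D} = D" using DF by auto
        finally show ?thesis by (simp add: mult.commute)
      qed
      then have "(\<Sum>y\<in>Fp p. mm y) * n \<le> h * real (card D) * n" using n0 by (intro mult_right_mono) auto
      also have "\<dots> \<le> h * N0 * n" using True h0 n0 by (intro mult_right_mono mult_left_mono) auto
      also have "h * N0 = \<delta> * (M / X\<^sup>2)" unfolding h_def N0_def using d0 X0 by (simp add: field_simps power2_eq_square)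
      also have "\<delta> * (M / X\<^sup>2) * n \<le> \<delta> * 1 * n"
        using MX X0 d0 n0 by (intro mult_right_mono mult_left_mono) (auto simp: divide_le_eq)
      finally show "norm2 p (conv p mm (dil p b mm)) \<le> \<delta> * n" by simp
    qed
    also have "\<dots> \<le> (1 + 2 * C1) * \<delta> * n" using C10 d0 n0 by (simp add: algebra_simps)
    finally show ?thesis unfolding C1_def n_def .
  next
    case False
    then have dN: "N0 < real (card D)" by simp
    then have Dne: "D \<noteq> {}" using N00 by auto
    define E where "E b = real (add_energy p D (dilset p b D))" for b
    have hyp: "hypB c K p D E"
      unfolding hypB_def E_def using bk p DF unfolding bK_def by blast
    have step1: "(\<Sum>b\<in>Fp_star p. lam b * norm2 p (conv p mm (dil p b mm)))
        \<le> (\<Sum>b\<in>Fp_star p. lam b * (h\<^sup>2 * sqrt (E b)))"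
    proof (rule sum_mono)
      fix b assume b: "b \<in> Fp_star p"
      have "0 \<le> lam b" using prob_nonneg[OF lam] Fp_star_sub b by blast
      moreover have "norm2 p (conv p mm (dil p b mm)) \<le> h\<^sup>2 * sqrt (E b)"
        unfolding E_def by (rule conv_energy[OF p b DF]) (use h0 mmD in auto)
      ultimately show "lam b * norm2 p (conv p mm (dil p b mm)) \<le> lam b * (h\<^sup>2 * sqrt (E b))"
        by (rule mult_left_mono[rotated])
    qed
    also have "\<dots> = h\<^sup>2 * (\<Sum>b\<in>Fp_star p. lam b * sqrt (E b))"
      by (simp add: sum_distrib_left mult_ac)
    also have "(\<Sum>b\<in>Fp_star p. lam b * sqrt (E b)) \<le> C1 * real (card D) powr (3/2)
      * ((min (real_of_int p / real (card D)) (real (card D))) powr (- c / 2)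
         + (\<Sum>x\<in>Fp p. (lam x)\<^sup>2) powr (c / 2))"
      unfolding C1_def by (rule lam_lemma[OF c K p lam DF Dne hyp]) (simp add: E_def)
    finally have S1: "(\<Sum>b\<in>Fp_star p. lam b * norm2 p (conv p mm (dil p b mm)))
      \<le> h\<^sup>2 * (C1 * real (card D) powr (3/2)
      * ((min (real_of_int p / real (card D)) (real (card D))) powr (- c / 2)
         + (\<Sum>x\<in>Fp p. (lam x)\<^sup>2) powr (c / 2)))"
      using h0 by (simp add: mult_left_mono)
    define Q where "Q = min (real_of_int p / real (card D)) (real (card D))"
    have pM: "1 / X\<^sup>2 \<le> real_of_int p * M"
    proof -
      have "1 / X \<le> n * sqrt (real_of_int p)"
        using tX X0 n0 sp by (simp add: field_simps)
      then have "(1 / X)\<^sup>2 \<le> (n * sqrt (real_of_int p))\<^sup>2"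
        using X0 by (intro power_mono) auto
      then show ?thesis unfolding Mn using pp by (simp add: power_mult_distrib power_divide mult.commute)
    qed
    have QN: "N0 \<le> Q"
    proof -
      have dpos: "0 < real (card D)" using dN N00 by linarith
      have "real (card D) \<le> 1 / a" using da a0 by (simp add: pos_le_divide_eq)
      then have "real_of_int p * a \<le> real_of_int p / real (card D)"
        using dpos pp a0 by (simp add: field_simps)
      moreover have "N0 \<le> real_of_int p * a"
      proof -
        have "N0 = \<delta>\<^sup>2 * (1 / X\<^sup>2)" unfolding N0_def by simp
        also have "\<dots> \<le> \<delta>\<^sup>2 * (real_of_int p * M)" using pM by (intro mult_left_mono) auto
        finally show ?thesis unfolding a_def by (simp add: mult_ac)
      qed
      ultimately show ?thesis unfolding Q_def using dN by simp
    qed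
    have br1: "Q powr (- c / 2) \<le> X powr (c - c\<^sup>2 / 7)"
    proof -
      have "Q powr (- c / 2) \<le> N0 powr (- c / 2)" using QN N00 c by (intro powr_mono2') auto
      also have "N0 powr (- c / 2) = X powr (c - c\<^sup>2 / 7)"
      proof -
        have "N0 powr (- c / 2) = (\<delta>\<^sup>2) powr (- c / 2) / (X\<^sup>2) powr (- c / 2)"
          unfolding N0_def by (rule powr_divide)
        also have "\<dots> = \<delta> powr (- c) / X powr (- c)" using d0 X0 by (simp add: sq_powr)
        also have "\<delta> powr (- c) = X powr (- c * c / 7)" unfolding \<delta> by (simp add: powr_powr)
        also have "X powr (- c * c / 7) / X powr (- c) = X powr (c - c\<^sup>2 / 7)"
          by (simp add: powr_diff[symmetric] power2_eq_square algebra_simps)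
        finally show ?thesis .
      qed
      finally show ?thesis .
    qed
    have br2: "(\<Sum>x\<in>Fp p. (lam x)\<^sup>2) powr (c / 2) \<le> X powr (c - c\<^sup>2 / 7)"
    proof -
      have L: "(\<Sum>x\<in>Fp p. (lam x)\<^sup>2) = nl\<^sup>2" unfolding nl_def using norm2_sq[of p lam] by simp
      have "(nl\<^sup>2) powr (c / 2) \<le> (X\<^sup>2) powr (c / 2)"
        using nlX nl0 c by (intro powr_mono2 power_mono) auto
      also have "\<dots> = X powr c" using X0 by (simp add: sq_powr)
      also have "\<dots> \<le> X powr (c - c\<^sup>2 / 7)"
        using X0 X1 c by (intro powr_mono') (auto simp: power2_eq_square)
      finally show ?thesis unfolding L .
    qed
    have br: "Q powr (- c / 2) + (\<Sum>x\<in>Fp p. (lam x)\<^sup>2) powr (c / 2) \<le> 2 * X powr (c - c\<^sup>2 / 7)"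
      using br1 br2 by simp
    define y where "y = \<delta> * n"
    have y0: "0 < y" unfolding y_def using d0 n0 by simp
    have ay: "a = y\<^sup>2" unfolding a_def y_def Mn by (simp add: power_mult_distrib)
    have dpow: "real (card D) powr (3/2) \<le> 1 / y ^ 3"
    proof -
      have "real (card D) \<le> 1 / y\<^sup>2" using da a0 ay by (simp add: pos_le_divide_eq)
      then have "real (card D) powr (3/2) \<le> (1 / y\<^sup>2) powr (3/2)" by (intro powr_mono2) auto
      also have "(1 / y\<^sup>2) powr (3/2) = 1 / y ^ 3"
      proof -
        have "(1 / y\<^sup>2) powr (3/2) = 1 / (y\<^sup>2) powr (3/2)" using y0 by (simp add: powr_divide)
        also have "(y\<^sup>2) powr (3/2) = y powr 3" using y0 by (simp add: sq_powr)
        also have "y powr 3 = y ^ 3" using powr_realpow[OF y0, of 3] by simp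
        finally show ?thesis .
      qed
      finally show ?thesis .
    qed
    have hy: "h\<^sup>2 * (1 / y ^ 3) = n / \<delta> ^ 5"
      unfolding h_def y_def Mn using d0 n0 by (simp add: field_simps power2_eq_square) (simp add: eval_nat_numeral mult_ac)
    have d5: "\<delta> ^ 5 = X powr (5 * c / 7)" unfolding \<delta> using X0 by (simp add: pow_powr mult.commute)
    have d6: "X powr (c - c\<^sup>2 / 7) \<le> \<delta> ^ 6"
    proof -
      have "\<delta> ^ 6 = X powr (6 * c / 7)" unfolding \<delta> using X0 by (simp add: pow_powr mult.commute)
      moreover have "X powr (c - c\<^sup>2 / 7) \<le> X powr (6 * c / 7)"
      proof (rule powr_mono')
        show "6 * c / 7 \<le> c - c\<^sup>2 / 7" using c by (simp add: power2_eq_square field_simps mult_left_le)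
      qed (use X0 X1 in auto)
      ultimately show ?thesis by simp
    qed
    have "h\<^sup>2 * (C1 * real (card D) powr (3/2) * (Q powr (- c / 2) + (\<Sum>x\<in>Fp p. (lam x)\<^sup>2) powr (c / 2)))
        = C1 * (h\<^sup>2 * real (card D) powr (3/2)) * (Q powr (- c / 2) + (\<Sum>x\<in>Fp p. (lam x)\<^sup>2) powr (c / 2))"
      by (simp add: mult_ac)
    also have "\<dots> \<le> C1 * (h\<^sup>2 * (1 / y ^ 3)) * (2 * X powr (c - c\<^sup>2 / 7))"
    proof (rule mult_mono)
      have "h\<^sup>2 * real (card D) powr (3 / 2) \<le> h\<^sup>2 * (1 / y ^ 3)" using dpow by (intro mult_left_mono) auto
      then show "C1 * (h\<^sup>2 * real (card D) powr (3 / 2)) \<le> C1 * (h\<^sup>2 * (1 / y ^ 3))"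
        using C10 by (rule mult_left_mono)
      show "Q powr (- c / 2) + (\<Sum>x\<in>Fp p. (lam x)\<^sup>2) powr (c / 2) \<le> 2 * X powr (c - c\<^sup>2 / 7)" by (rule br)
      show "0 \<le> C1 * (h\<^sup>2 * (1 / y ^ 3))" using C10 y0 by simp
      show "0 \<le> Q powr (- c / 2) + (\<Sum>x\<in>Fp p. (lam x)\<^sup>2) powr (c / 2)" by simp
    qed
    also have "\<dots> = 2 * C1 * (n * (X powr (c - c\<^sup>2 / 7) / \<delta> ^ 5))" unfolding hy by (simp add: field_simps)
    also have "\<dots> \<le> 2 * C1 * (n * \<delta>)"
    proof -
      have "X powr (c - c\<^sup>2 / 7) / \<delta> ^ 5 \<le> \<delta> ^ 6 / \<delta> ^ 5" using d6 d0 by (intro divide_right_mono) auto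
      also have "\<dots> = \<delta>" using d0 by (simp add: power_eq_if)
      finally show ?thesis using C10 n0 by (intro mult_left_mono) auto
    qed
    also have "\<dots> \<le> (1 + 2 * C1) * \<delta> * n" using d0 n0 by (simp add: algebra_simps)
    finally show ?thesis using S1 unfolding Q_def C1_def n_def by linarith
  qed
qed



theorem theorem4:
  fixes c0 :: real
  assumes "0 < c0" and "bourgain_energy c0"
  shows "\<exists>C. \<forall>(p::int) lam mu. prime p \<and> prob_measure p lam \<and> prob_measure p mu \<longrightarrow>
     (\<Sum>b\<in>Fp_star p. lam b * norm2 p (conv p mu (dil p b mu)))
       \<le> C * (norm2 p lam + norm2 p mu + 1 / (norm2 p mu * sqrt (real_of_int p))) powr (c0 / 7)
           * norm2 p mu"
proof -
  have c1: "c0 < 1" by (rule c_lt_1[OF assms(2)])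
  have c: "0 < c0" "c0 < 1" using assms(1) c1 by auto
  obtain K where K0: "0 \<le> K" and bk: "bK c0 K"
    using bourgain_K[OF assms(2)] unfolding bK_def by blast
  define C1 where "C1 = 2 * sqrt K * (2 + CG c0)"
  have C10: "0 \<le> C1" unfolding C1_def using K0 CG_pos[OF c] by simp
  define C where "C = 5 + 2 * C1"
  have C1': "1 \<le> C" unfolding C_def using C10 by simp
  show ?thesis
  proof (intro exI[of _ C] allI impI)
    fix p :: int and lam mu :: "int \<Rightarrow> real"
    assume h: "prime p \<and> prob_measure p lam \<and> prob_measure p mu"
    then have p: "prime p" and lam: "prob_measure p lam" and mu: "prob_measure p mu" by auto
    define X where "X = norm2 p lam + norm2 p mu + 1 / (norm2 p mu * sqrt (real_of_int p))"
    define n where "n = norm2 p mu"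
    have n0: "0 < n" unfolding n_def by (rule norm2_pos_prob[OF p mu])
    have pp: "0 < real_of_int p" using prime_gt_1_int[OF p] by simp
    have X0: "0 < X" unfolding X_def using n0 pp norm2_nonneg[of p lam] unfolding n_def
      by (intro add_nonneg_pos add_nonneg_pos) auto
    show "(\<Sum>b\<in>Fp_star p. lam b * norm2 p (conv p mu (dil p b mu))) \<le> C * X powr (c0 / 7) * norm2 p mu"
    proof (cases "1 \<le> X")
      case True
      have "(\<Sum>b\<in>Fp_star p. lam b * norm2 p (conv p mu (dil p b mu))) \<le> n"
        unfolding n_def by (rule basic_bound[OF p lam mu])
      also have "\<dots> = 1 * 1 * n" by simp
      also have "\<dots> \<le> C * X powr (c0 / 7) * n"
      proof (intro mult_right_mono mult_mono)
        show "1 \<le> X powr (c0 / 7)" using True c by (intro ge_one_powr_ge_zero) auto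
      qed (use C1' n0 in auto)
      finally show ?thesis unfolding n_def .
    next
      case False
      then have X1: "X < 1" by simp
      define \<delta> where "\<delta> = X powr (c0 / 7)"
      define M where "M = (\<Sum>x\<in>Fp p. (mu x)\<^sup>2)"
      have Mn: "M = n\<^sup>2" unfolding M_def n_def using norm2_sq[of p mu] by simp
      have M0: "0 < M" using Mn n0 by simp
      have d0: "0 < \<delta>" unfolding \<delta>_def using X0 by simp
      have d1: "\<delta> < 1" unfolding \<delta>_def using powr_less_mono2[of "c0/7" X 1] X0 X1 c by simp
      define mm where "mm = (\<lambda>x. if \<delta>\<^sup>2 * M < mu x \<and> mu x \<le> M / \<delta> then mu x else 0)"
      have ah: "\<delta>\<^sup>2 * M \<le> M / \<delta>"
      proof -
        have "\<delta>\<^sup>2 * \<delta> \<le> 1 * 1" using d0 d1 by (simp add: power2_eq_square mult_le_one)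
        then have "\<delta>\<^sup>2 * M * \<delta> \<le> M" using M0 by (simp add: algebra_simps mult_le_cancel_right1)
        then show ?thesis using d0 by (simp add: pos_le_divide_eq)
      qed
      have perb: "norm2 p (conv p mu (dil p b mu)) \<le> norm2 p (conv p mm (dil p b mm)) + 4 * \<delta> * n"
        if b: "b \<in> Fp_star p" for b
      proof -
        have "norm2 p (conv p mu (dil p b mu)) \<le> norm2 p (conv p mm (dil p b mm))
           + 2 * sqrt (\<delta>\<^sup>2 * M) + 2 * (M / (M / \<delta>)) * norm2 p mu"
          unfolding mm_def M_def
          by (rule decomp[OF p mu b]) (use d0 M0 ah in \<open>auto simp: M_def\<close>)
        also have "sqrt (\<delta>\<^sup>2 * M) = \<delta> * n" unfolding Mn using d0 n0
          by (simp add: real_sqrt_mult)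
        also have "M / (M / \<delta>) = \<delta>" using M0 d0 by simp
        finally show ?thesis unfolding n_def by simp
      qed
      have "(\<Sum>b\<in>Fp_star p. lam b * norm2 p (conv p mu (dil p b mu)))
          \<le> (\<Sum>b\<in>Fp_star p. lam b * norm2 p (conv p mm (dil p b mm)) + lam b * (4 * \<delta> * n))"
      proof (rule sum_mono)
        fix b assume b: "b \<in> Fp_star p"
        have "0 \<le> lam b" using prob_nonneg[OF lam] Fp_star_sub b by blast
        then have "lam b * norm2 p (conv p mu (dil p b mu)) \<le> lam b * (norm2 p (conv p mm (dil p b mm)) + 4 * \<delta> * n)"
          using perb[OF b] by (rule mult_left_mono[rotated])
        then show "lam b * norm2 p (conv p mu (dil p b mu)) \<le> lam b * norm2 p (conv p mm (dil p b mm)) + lam b * (4 * \<delta> * n)"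
          by (simp add: distrib_left)
      qed
      also have "\<dots> = (\<Sum>b\<in>Fp_star p. lam b * norm2 p (conv p mm (dil p b mm))) + (\<Sum>b\<in>Fp_star p. lam b) * (4 * \<delta> * n)"
        by (simp add: sum.distrib sum_distrib_right)
      also have "(\<Sum>b\<in>Fp_star p. lam b * norm2 p (conv p mm (dil p b mm))) \<le> (1 + 2 * C1) * \<delta> * n"
        unfolding mm_def M_def C1_def n_def
        by (rule mid_bound[OF c K0 bk p lam mu X_def X1 \<delta>_def])
      also have "(\<Sum>b\<in>Fp_star p. lam b) * (4 * \<delta> * n) \<le> 1 * (4 * \<delta> * n)"
        using sum_star_le1[OF lam] d0 n0 by (intro mult_right_mono) auto
      finally have "(\<Sum>b\<in>Fp_star p. lam b * norm2 p (conv p mu (dil p b mu))) \<le> C * \<delta> * n"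
        unfolding C_def by (simp add: algebra_simps)
      then show ?thesis unfolding \<delta>_def n_def .
    qed
  qed
qed


end
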